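(* Let $L>0$, $m>0$, let $a,b:[-L,L]\to\mathbb{R}$ be positive even $C^1([-L,L])$ functions, and let $G\in C^{1,1}_{\rm loc}(\mathbb{R})$ be nonnegative and even; set $f:=-G'$. Suppose $$(ab)'\ge0\ \text{in }(0,L),\qquad G\ge G(m)\ \text{in }(0,\infty),\qquad G'\le 0\ \text{in }(0,m).$$ Then the problem $-(au')'=bf(u)$ in $(-L,L)$, $u(L)=-u(-L)=m$, admits a unique solution, which is therefore odd. Furthermore, this solution is increasing.
   Context: A solution is a function $u\in H^1((-L,L))$ satisfying the equation weakly (hence classically) and the boundary conditions. *)

theory Defs
  imports "HOL-Analysis.Analysis"
begin

text \<open>In one dimension an H^1 weak solution is continuous on [-L,L] and (since a is C^1 and
  f(u) is continuous) classical; conversely a classical solution continuous on [-L,L]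
  has a u' Lipschitz, hence lies in H^1. We use the classical formulation.\<close>

definition is_solution ::
  "real \<Rightarrow> (real \<Rightarrow> real) \<Rightarrow> (real \<Rightarrow> real) \<Rightarrow> (real \<Rightarrow> real) \<Rightarrow> real \<Rightarrow> (real \<Rightarrow> real) \<Rightarrow> bool"
  where
  "is_solution L a b f m u \<longleftrightarrow>
     continuous_on {-L..L} u \<and>
     (\<exists>du. \<forall>x\<in>{-L<..<L}.
        (u has_real_derivative du x) (at x) \<and>
        ((\<lambda>y. a y * du y) has_real_derivative (- (b x * f (u x)))) (at x)) \<and>
     u L = m \<and> u (-L) = - m"

definition C1_on_with_deriv :: "real set \<Rightarrow> (real \<Rightarrow> real) \<Rightarrow> (real \<Rightarrow> real) \<Rightarrow> bool" where
  "C1_on_with_deriv S h d \<longleftrightarrow>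
     continuous_on S d \<and> (\<forall>x\<in>S. (h has_real_derivative d x) (at x within S))"

end

theory Submission
  imports Defs
begin


locale setting =
  fixes L m :: real and a b da db G g :: "real \<Rightarrow> real"
  assumes L_pos: "L > 0" and m_pos: "m > 0"
    and a_C1: "C1_on_with_deriv {-L..L} a da"
    and b_C1: "C1_on_with_deriv {-L..L} b db"
    and a_pos: "\<forall>x\<in>{-L..L}. a x > 0"
    and b_pos: "\<forall>x\<in>{-L..L}. b x > 0"
    and a_even: "\<forall>x\<in>{-L..L}. a (-x) = a x"
    and b_even: "\<forall>x\<in>{-L..L}. b (-x) = b x"
    and G_deriv: "\<forall>x. (G has_real_derivative g x) (at x)"
    and g_loc_lip: "\<forall>x. \<exists>e>0. \<exists>C. C-lipschitz_on (ball x e) g"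
    and G_nonneg: "\<forall>x. G x \<ge> 0"
    and G_even: "\<forall>x. G (-x) = G x"
    and ab_mono: "\<forall>x\<in>{0<..<L}. da x * b x + a x * db x \<ge> 0"
    and G_ge: "\<forall>x>0. G x \<ge> G m"
    and g_nonpos: "\<forall>x\<in>{0<..<m}. g x \<le> 0"
begin

lemma a_cont: "continuous_on {-L..L} a"
  using a_C1 unfolding C1_on_with_deriv_def by (metis DERIV_continuous_on)
lemma b_cont: "continuous_on {-L..L} b"
  using b_C1 unfolding C1_on_with_deriv_def by (metis DERIV_continuous_on)

lemma a_deriv: "x \<in> {-L<..<L} \<Longrightarrow> (a has_real_derivative da x) (at x)"
  using a_C1 unfolding C1_on_with_deriv_def
  by (metis at_within_Icc_at greaterThanLessThan_iff atLeastAtMost_iff less_imp_le)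
lemma b_deriv: "x \<in> {-L<..<L} \<Longrightarrow> (b has_real_derivative db x) (at x)"
  using b_C1 unfolding C1_on_with_deriv_def
  by (metis at_within_Icc_at greaterThanLessThan_iff atLeastAtMost_iff less_imp_le)

lemma even_deriv_odd:
  fixes h dh :: "real \<Rightarrow> real"
  assumes ev: "\<forall>x\<in>{-L..L}. h (-x) = h x"
    and d: "\<And>x. x \<in> {-L<..<L} \<Longrightarrow> (h has_real_derivative dh x) (at x)"
    and x: "x \<in> {-L<..<L}"
  shows "dh (-x) = - dh x"
proof -
  have mx: "-x \<in> {-L<..<L}" using x by auto
  have "((\<lambda>y. h (-y)) has_real_derivative dh (-x) * (-1)) (at x)"
    by (rule DERIV_chain2[where f=h and g="\<lambda>y. -y"]) (use d[OF mx] in \<open>auto intro!: derivative_eq_intros\<close>)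
  then have "(h has_real_derivative dh (-x) * (-1)) (at x)"
    by (rule has_field_derivative_transform_within_open[where S="{-L<..<L}"]) (use x ev in auto)
  from DERIV_unique[OF this d[OF x]] show ?thesis by simp
qed

definition c :: "real \<Rightarrow> real" where "c x = a x * b x"

lemma c_cont: "continuous_on {-L..L} c"
  unfolding c_def by (intro continuous_intros a_cont b_cont)

lemma c_deriv: "x \<in> {-L<..<L} \<Longrightarrow> (c has_real_derivative (da x * b x + a x * db x)) (at x)"
  unfolding c_def[abs_def] using a_deriv b_deriv
  by (auto intro!: derivative_eq_intros)

lemma c_even: "x \<in> {-L..L} \<Longrightarrow> c (-x) = c x"
  unfolding c_def using a_even b_even by auto

lemma c_pos: "x \<in> {-L..L} \<Longrightarrow> c x > 0"
  unfolding c_def using a_pos b_pos by auto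

lemma c_mono: assumes "0 \<le> x" "x \<le> y" "y \<le> L" shows "c x \<le> c y"
proof (rule DERIV_nonneg_imp_increasing_open[OF assms(2)])
  fix z assume "x < z" "z < y"
  then have z: "z \<in> {-L<..<L}" "z \<in> {0<..<L}" using assms by auto
  show "\<exists>y. (c has_real_derivative y) (at z) \<and> 0 \<le> y"
    using c_deriv[OF z(1)] ab_mono z(2) by blast
next
  show "continuous_on {x..y} c" using c_cont by (rule continuous_on_subset) (use assms in auto)
qed

lemma c_mono_abs: assumes "x \<in> {-L..L}" "y \<in> {-L..L}" "\<bar>x\<bar> \<le> \<bar>y\<bar>" shows "c x \<le> c y"
proof -
  have "c x = c \<bar>x\<bar>" using c_even assms by (cases "x \<ge> 0") auto
  moreover have "c y = c \<bar>y\<bar>" using c_even assms by (cases "y \<ge> 0") auto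
  moreover have "c \<bar>x\<bar> \<le> c \<bar>y\<bar>" using c_mono assms by auto
  ultimately show ?thesis by simp
qed

lemma a_bounds: obtains amin amax where "amin > 0" "\<forall>x\<in>{-L..L}. amin \<le> a x \<and> a x \<le> amax"
proof -
  obtain x1 where x1: "x1 \<in> {-L..L}" "\<forall>y\<in>{-L..L}. a x1 \<le> a y"
    using continuous_attains_inf[OF compact_Icc _ a_cont] L_pos by auto
  obtain x2 where x2: "x2 \<in> {-L..L}" "\<forall>y\<in>{-L..L}. a y \<le> a x2"
    using continuous_attains_sup[OF compact_Icc _ a_cont] L_pos by auto
  show ?thesis using that[of "a x1" "a x2"] x1 x2 a_pos by auto
qed

lemma b_bounds: obtains bmax where "\<forall>x\<in>{-L..L}. 0 < b x \<and> b x \<le> bmax"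
proof -
  obtain x2 where x2: "x2 \<in> {-L..L}" "\<forall>y\<in>{-L..L}. b y \<le> b x2"
    using continuous_attains_sup[OF compact_Icc _ b_cont] L_pos by auto
  show ?thesis using that[of "b x2"] x2 b_pos by auto
qed

lemma g_odd: "g (-x) = - g x"
proof -
  have "((\<lambda>y. G (-y)) has_real_derivative g (-x) * (-1)) (at x)"
    by (rule DERIV_chain2[where f=G and g="\<lambda>y. -y"]) (use G_deriv in \<open>auto intro!: derivative_eq_intros\<close>)
  then have "(G has_real_derivative g (-x) * (-1)) (at x)" using G_even by simp
  from DERIV_unique[OF this G_deriv[rule_format, of x]] show ?thesis by simp
qed

lemma g0: "g 0 = 0" using g_odd[of 0] by simp

lemma G_min: "G m \<le> G x"
proof -
  have G0: "G m \<le> G 0"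
  proof -
    have cG: "continuous_on {0..m} G" using G_deriv by (meson DERIV_isCont continuous_at_imp_continuous_on)
    have dG: "\<And>x. G differentiable at x" using G_deriv real_differentiable_def by blast
    obtain l z where "0 < z" "z < m" "(G has_real_derivative l) (at z)" "G m - G 0 = (m - 0) * l"
      using MVT[OF m_pos cG dG] by blast
    moreover have "l = g z" using DERIV_unique \<open>(G has_real_derivative l) (at z)\<close> G_deriv by blast
    ultimately have "G m - G 0 = m * g z" by simp
    moreover have "g z \<le> 0" using g_nonpos \<open>0 < z\<close> \<open>z < m\<close> by auto
    ultimately show ?thesis using m_pos by (smt (verit) mult_nonneg_nonpos)
  qed
  show ?thesis
  proof (cases "x > 0")
    case True then show ?thesis using G_ge by auto
  next
    case False
    show ?thesis
    proof (cases "x = 0")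
      case True then show ?thesis using G0 by simp
    next
      case False
      then have "-x > 0" using \<open>\<not> x > 0\<close> by simp
      then have "G m \<le> G (-x)" using G_ge by blast
      then show ?thesis using G_even by simp
    qed
  qed
qed

lemma g_at_min: "G v = G m \<Longrightarrow> g v = 0"
  by (rule DERIV_local_min[OF G_deriv[rule_format, of v], of 1]) (use G_min in auto)

lemma gm: "g m = 0" and gmm: "g (-m) = 0"
  using g_at_min[of m] g_at_min[of "-m"] G_even by auto

lemma g_cont: "isCont g x"
proof -
  obtain e C where "e > 0" "C-lipschitz_on (ball x e) g" using g_loc_lip by blast
  then have "continuous_on (ball x e) g" by (metis lipschitz_on_continuous_on)
  then show ?thesis using \<open>e > 0\<close> by (simp add: continuous_on_eq_continuous_at)
qed

lemma g_contin: "continuous_on S g"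
  using g_cont by (simp add: continuous_at_imp_continuous_on)

lemma g_lip: obtains K where "K \<ge> 0" "K-lipschitz_on {-R..R} g"
proof -
  have ll: "local_lipschitz {0::real} {-R..R} (\<lambda>_. g)"
  proof (rule local_lipschitzI)
    fix t x :: real
    obtain e C where "e > 0" "C-lipschitz_on (ball x e) g" using g_loc_lip by blast
    moreover have "cball x (e/2) \<subseteq> ball x e" using \<open>e > 0\<close> by (simp add: cball_subset_ball_iff)
    ultimately have "C-lipschitz_on (cball x (e/2) \<inter> {-R..R}) g"
      using lipschitz_on_subset by (metis inf.coboundedI1)
    then show "\<exists>u>0. \<exists>L. \<forall>t\<in>cball t u \<inter> {0}. L-lipschitz_on (cball x u \<inter> {-R..R}) g"
      using \<open>e > 0\<close> by (intro exI[of _ "e/2"]) auto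
  qed
  obtain K where K: "\<And>t. t \<in> {0::real} \<Longrightarrow> K-lipschitz_on {-R..R} g"
    using local_lipschitz_compact_implies_lipschitz[OF ll compact_Icc[of "-R" R] compact_sing[of "0::real"]] by auto
  show ?thesis
  proof (cases "R \<ge> 0")
    case True
    then have "K \<ge> 0" using K[of 0] lipschitz_on_nonneg[of K "{-R..R}" g] by auto
    then show ?thesis using that K by auto
  next
    case False
    then have "{-R..R} = {}" by auto
    then show ?thesis using that[of 0] by (auto simp: lipschitz_on_def)
  qed
qed


definition osol :: "(real \<Rightarrow> real) \<Rightarrow> (real \<Rightarrow> real) \<Rightarrow> bool" where
  "osol u w \<longleftrightarrow> continuous_on {-L..L} u \<and>
     (\<forall>x\<in>{-L<..<L}. (u has_real_derivative w x / a x) (at x) \<and>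
                      (w has_real_derivative b x * g (u x)) (at x))"

definition bsol :: "(real \<Rightarrow> real) \<Rightarrow> (real \<Rightarrow> real) \<Rightarrow> bool" where
  "bsol u w \<longleftrightarrow> osol u w \<and> u L = m \<and> u (-L) = -m"

lemma is_solution_bsol:
  assumes "is_solution L a b (\<lambda>s. - g s) m u" shows "\<exists>w. bsol u w"
proof -
  obtain du where du: "\<forall>x\<in>{-L<..<L}. (u has_real_derivative du x) (at x) \<and>
        ((\<lambda>y. a y * du y) has_real_derivative (- (b x * (- g (u x))))) (at x)"
    and c: "continuous_on {-L..L} u" "u L = m" "u (-L) = - m"
    using assms unfolding is_solution_def by blast
  have "osol u (\<lambda>y. a y * du y)"
    unfolding osol_def
  proof (intro conjI ballI)
    fix x assume x: "x \<in> {-L<..<L}"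
    then have "a x > 0" using a_pos by auto
    then show "(u has_real_derivative a x * du x / a x) (at x)" using du x by simp
    show "((\<lambda>y. a y * du y) has_real_derivative b x * g (u x)) (at x)" using du x by simp
  qed (rule c)
  then show ?thesis using c unfolding bsol_def by blast
qed

lemma bsol_is_solution:
  assumes "bsol u w" shows "is_solution L a b (\<lambda>s. - g s) m u"
proof -
  have o: "osol u w" and bc: "u L = m" "u (-L) = -m" using assms unfolding bsol_def by auto
  have "\<forall>x\<in>{-L<..<L}. (u has_real_derivative w x / a x) (at x) \<and>
        ((\<lambda>y. a y * (w y / a y)) has_real_derivative (- (b x * (- g (u x))))) (at x)"
  proof
    fix x assume x: "x \<in> {-L<..<L}"
    show "(u has_real_derivative w x / a x) (at x) \<and>
        ((\<lambda>y. a y * (w y / a y)) has_real_derivative (- (b x * (- g (u x))))) (at x)"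
    proof
      show "(u has_real_derivative w x / a x) (at x)" using o x unfolding osol_def by blast
      have "(w has_real_derivative b x * g (u x)) (at x)" using o x unfolding osol_def by blast
      then have "(w has_real_derivative (- (b x * (- g (u x))))) (at x)" by simp
      then show "((\<lambda>y. a y * (w y / a y)) has_real_derivative (- (b x * (- g (u x))))) (at x)"
      proof (rule has_field_derivative_transform_within_open[where S="{-L<..<L}"])
        fix y :: real assume "y \<in> {-L<..<L}"
        then have "a y > 0" using a_pos by auto
        then show "w y = a y * (w y / a y)" by simp
      qed (use x in auto)
    qed
  qed
  then show ?thesis unfolding is_solution_def using conjunct1[OF o[unfolded osol_def]] bc
    by (intro conjI exI[where x="\<lambda>y. w y / a y"]) auto
qed

lemma osol_u_deriv: "osol u w \<Longrightarrow> x \<in> {-L<..<L} \<Longrightarrow> (u has_real_derivative w x / a x) (at x)"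
  unfolding osol_def by blast
lemma osol_w_deriv: "osol u w \<Longrightarrow> x \<in> {-L<..<L} \<Longrightarrow> (w has_real_derivative b x * g (u x)) (at x)"
  unfolding osol_def by blast
lemma osol_cont: "osol u w \<Longrightarrow> continuous_on {-L..L} u"
  unfolding osol_def by blast
lemma osol_w_cont_at: "osol u w \<Longrightarrow> x \<in> {-L<..<L} \<Longrightarrow> isCont w x"
  using DERIV_isCont[OF osol_w_deriv] .
lemma osol_w_cont: "osol u w \<Longrightarrow> continuous_on {-L<..<L} w"
  using osol_w_cont_at by (intro continuous_at_imp_continuous_on) blast
lemma osol_u_cont_at: "osol u w \<Longrightarrow> x \<in> {-L<..<L} \<Longrightarrow> isCont u x"
  using DERIV_isCont[OF osol_u_deriv] .

lemma gronwall0: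
  fixes y y' :: "real \<Rightarrow> real"
  assumes x0: "x0 \<in> {\<alpha><..<\<beta>}"
    and d: "\<And>x. x \<in> {\<alpha><..<\<beta>} \<Longrightarrow> (y has_real_derivative y' x) (at x)"
    and le: "\<And>x. x \<in> {\<alpha><..<\<beta>} \<Longrightarrow> \<bar>y' x\<bar> \<le> K * y x"
    and nn: "\<And>x. x \<in> {\<alpha><..<\<beta>} \<Longrightarrow> y x \<ge> 0"
    and y0: "y x0 = 0"
    and x: "x \<in> {\<alpha><..<\<beta>}"
  shows "y x = 0"
proof (cases "x0 \<le> x")
  case True
  let ?h = "\<lambda>t. y t * exp (- K * t)"
  have "?h x \<le> ?h x0"
  proof (rule DERIV_nonpos_imp_nonincreasing[OF True])
    fix t assume t: "x0 \<le> t" "t \<le> x"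
    then have tt: "t \<in> {\<alpha><..<\<beta>}" using x0 x by auto
    have "(?h has_real_derivative (y' t * exp (- K * t) + y t * (exp (- K * t) * (- K)))) (at t)"
      by (rule derivative_eq_intros d[OF tt] | simp)+
    moreover have "y' t * exp (- K * t) + y t * (exp (- K * t) * (- K)) = (y' t - K * y t) * exp (- K * t)"
      by (simp add: algebra_simps)
    moreover have "(y' t - K * y t) * exp (- K * t) \<le> 0"
      using le[OF tt] by (intro mult_nonpos_nonneg) auto
    ultimately show "\<exists>z. (?h has_real_derivative z) (at t) \<and> z \<le> 0" by auto
  qed
  then have "y x * exp (- K * x) \<le> 0" using y0 by simp
  then have "y x \<le> 0" by (simp add: mult_le_0_iff)
  then show ?thesis using nn[OF x] by simp
next
  case False
  then have xx: "x \<le> x0" by simp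
  let ?h = "\<lambda>t. y t * exp (K * t)"
  have "?h x \<le> ?h x0"
  proof (rule DERIV_nonneg_imp_nondecreasing[OF xx])
    fix t assume t: "x \<le> t" "t \<le> x0"
    then have tt: "t \<in> {\<alpha><..<\<beta>}" using x0 x by auto
    have "(?h has_real_derivative (y' t * exp (K * t) + y t * (exp (K * t) * K))) (at t)"
      by (rule derivative_eq_intros d[OF tt] | simp)+
    moreover have "y' t * exp (K * t) + y t * (exp (K * t) * K) = (y' t + K * y t) * exp (K * t)"
      by (simp add: algebra_simps)
    moreover have "(y' t + K * y t) * exp (K * t) \<ge> 0"
      using le[OF tt] by (intro mult_nonneg_nonneg) auto
    ultimately show "\<exists>z. (?h has_real_derivative z) (at t) \<and> 0 \<le> z" by auto
  qed
  then have "y x * exp (K * x) \<le> 0" using y0 by simp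
  then have "y x \<le> 0" by (simp add: mult_le_0_iff)
  then show ?thesis using nn[OF x] by simp
qed

lemma bounded_on_Icc:
  fixes u :: "real \<Rightarrow> real"
  assumes "continuous_on {-L..L} u" obtains R where "R \<ge> 0" "\<forall>x\<in>{-L..L}. \<bar>u x\<bar> \<le> R"
proof -
  have "compact (u ` {-L..L})" by (rule compact_continuous_image[OF assms compact_Icc])
  then obtain R where "\<forall>y\<in>u ` {-L..L}. norm y \<le> R" using compact_imp_bounded bounded_iff by metis
  then show ?thesis using that[of "max R 0"] by force
qed

lemma ivp_unique:
  assumes o1: "osol u1 w1" and o2: "osol u2 w2" and x0: "x0 \<in> {-L<..<L}"
    and e1: "u1 x0 = u2 x0" and e2: "w1 x0 = w2 x0"
    and x: "x \<in> {-L<..<L}"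
  shows "u1 x = u2 x \<and> w1 x = w2 x"
proof -
  obtain R1 where R1: "\<forall>x\<in>{-L..L}. \<bar>u1 x\<bar> \<le> R1" using bounded_on_Icc osol_cont[OF o1] by blast
  obtain R2 where R2: "\<forall>x\<in>{-L..L}. \<bar>u2 x\<bar> \<le> R2" using bounded_on_Icc osol_cont[OF o2] by blast
  define R where "R = max R1 R2"
  obtain Kg where Kg: "Kg \<ge> 0" "Kg-lipschitz_on {-R..R} g" using g_lip by blast
  obtain amin amax where am: "amin > 0" "\<forall>x\<in>{-L..L}. amin \<le> a x \<and> a x \<le> amax" using a_bounds by blast
  obtain bmax where bm: "\<forall>x\<in>{-L..L}. 0 < b x \<and> b x \<le> bmax" using b_bounds by blast
  define K where "K = 1 / amin + bmax * Kg"
  define y where "y = (\<lambda>t. (u1 t - u2 t) * (u1 t - u2 t) + (w1 t - w2 t) * (w1 t - w2 t))"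
  define y' where "y' = (\<lambda>t. 2 * (u1 t - u2 t) * (w1 t / a t - w2 t / a t) +
                          2 * (w1 t - w2 t) * (b t * g (u1 t) - b t * g (u2 t)))"
  have "y x = 0"
  proof (rule gronwall0[where y' = y' and K = K, OF x0 _ _ _ _ x])
    fix t assume t: "t \<in> {-L<..<L}"
    have d1: "((\<lambda>t. u1 t - u2 t) has_real_derivative (w1 t / a t - w2 t / a t)) (at t)"
      by (intro DERIV_diff osol_u_deriv[OF o1 t] osol_u_deriv[OF o2 t])
    have d2: "((\<lambda>t. w1 t - w2 t) has_real_derivative (b t * g (u1 t) - b t * g (u2 t))) (at t)"
      by (intro DERIV_diff osol_w_deriv[OF o1 t] osol_w_deriv[OF o2 t])
    have "t \<in> {-L..L}" using t by simp
    then have ant: "a t \<noteq> 0" using a_pos by (metis less_irrefl)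
    show "(y has_real_derivative y' t) (at t)"
      using DERIV_add[OF DERIV_mult[OF d1 d1] DERIV_mult[OF d2 d2]] unfolding y_def
      by (rule DERIV_cong) (use ant in \<open>simp add: y'_def field_simps\<close>)
    show "0 \<le> y t" unfolding y_def by (simp add: add_nonneg_nonneg)
    have tI: "t \<in> {-L..L}" using t by auto
    define p where "p = \<bar>u1 t - u2 t\<bar>"
    define q where "q = \<bar>w1 t - w2 t\<bar>"
    have at1: "a t \<ge> amin" using am tI by auto
    have at: "a t \<ge> amin" "a t > 0" using at1 am(1) by linarith+
    have bt: "0 < b t" "b t \<le> bmax" using bm tI by auto
    have "\<bar>u1 t\<bar> \<le> R1" using R1 tI by blast
    then have u1R: "u1 t \<in> {-R..R}" unfolding R_def by (auto simp: abs_le_iff le_max_iff_disj)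
    have "\<bar>u2 t\<bar> \<le> R2" using R2 tI by blast
    then have u2R: "u2 t \<in> {-R..R}" unfolding R_def by (auto simp: abs_le_iff le_max_iff_disj)
    have gl: "\<bar>g (u1 t) - g (u2 t)\<bar> \<le> Kg * p"
      using lipschitz_onD[OF Kg(2) u1R u2R] unfolding p_def dist_real_def .
    have t1: "\<bar>2 * (u1 t - u2 t) * (w1 t / a t - w2 t / a t)\<bar> \<le> 2 * p * q / amin"
    proof -
      have e: "w1 t / a t - w2 t / a t = (w1 t - w2 t) / a t" by (simp add: diff_divide_distrib)
      have "\<bar>2 * (u1 t - u2 t) * (w1 t / a t - w2 t / a t)\<bar> = \<bar>2\<bar> * \<bar>u1 t - u2 t\<bar> * \<bar>w1 t - w2 t\<bar> / \<bar>a t\<bar>"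
        unfolding e by (simp only: abs_mult abs_divide times_divide_eq_right)
      also have "\<dots> = 2 * p * q / a t" using at unfolding p_def q_def by simp
      finally have "\<bar>2 * (u1 t - u2 t) * (w1 t / a t - w2 t / a t)\<bar> = 2 * p * q / a t" .
      also have "\<dots> \<le> 2 * p * q / amin"
        using at am(1) unfolding p_def q_def by (intro divide_left_mono) auto
      finally show ?thesis .
    qed
    have t2: "\<bar>2 * (w1 t - w2 t) * (b t * g (u1 t) - b t * g (u2 t))\<bar> \<le> 2 * p * q * (bmax * Kg)"
    proof -
      have e: "b t * g (u1 t) - b t * g (u2 t) = b t * (g (u1 t) - g (u2 t))" by (simp add: right_diff_distrib)
      have "\<bar>2 * (w1 t - w2 t) * (b t * g (u1 t) - b t * g (u2 t))\<bar> = \<bar>2\<bar> * \<bar>w1 t - w2 t\<bar> * (\<bar>b t\<bar> * \<bar>g (u1 t) - g (u2 t)\<bar>)"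
        unfolding e by (simp only: abs_mult)
      also have "\<dots> = 2 * q * (b t * \<bar>g (u1 t) - g (u2 t)\<bar>)" using bt unfolding q_def by simp
      also have "\<dots> \<le> 2 * q * (bmax * (Kg * p))"
      proof (rule mult_left_mono)
        show "b t * \<bar>g (u1 t) - g (u2 t)\<bar> \<le> bmax * (Kg * p)"
          by (rule mult_mono) (use bt gl in auto)
        show "0 \<le> 2 * q" unfolding q_def by simp
      qed
      finally show ?thesis by (simp add: algebra_simps)
    qed
    have pq: "2 * p * q \<le> y t"
    proof -
      have "0 \<le> (p - q)^2" by simp
      then have "2 * p * q \<le> p * p + q * q" by (simp add: power2_eq_square algebra_simps)
      then show ?thesis unfolding y_def p_def q_def by (simp add: abs_mult_self_eq)
    qed
    have "\<bar>y' t\<bar> \<le> 2 * p * q / amin + 2 * p * q * (bmax * Kg)"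
      unfolding y'_def using t1 t2 by linarith
    also have "\<dots> = (2 * p * q) * K" unfolding K_def using am(1) by (simp add: algebra_simps)
    also have "\<dots> \<le> K * y t"
    proof -
      have K0: "K \<ge> 0" unfolding K_def using am(1) bt Kg(1) by (simp add: add_nonneg_nonneg)
      show ?thesis using mult_left_mono[OF pq K0] by (simp add: mult.commute)
    qed
    finally show "\<bar>y' t\<bar> \<le> K * y t" .
  next
    show "y x0 = 0" unfolding y_def using e1 e2 by simp
  qed
  then show ?thesis unfolding y_def by (simp add: sum_squares_eq_zero_iff)
qed

lemma const_interior_endpoints:
  fixes u :: "real \<Rightarrow> real"
  assumes "continuous_on {-L..L} u" "\<forall>x\<in>{-L<..<L}. u x = k"
  shows "u L = k" "u (-L) = k"
proof -
  have l: "(u \<longlongrightarrow> u L) (at_left L)"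
    using continuous_on_Icc_at_leftD[OF assms(1)] L_pos by simp
  have "eventually (\<lambda>y. y \<in> {-L<..<L}) (at_left L)"
    by (rule eventually_at_left_real) (use L_pos in simp)
  then have "eventually (\<lambda>y. u y = k) (at_left L)"
    by eventually_elim (use assms(2) in auto)
  then have k1: "(u \<longlongrightarrow> k) (at_left L)"
    by (rule tendsto_eventually)
  show "u L = k" by (rule tendsto_unique[OF trivial_limit_at_left_real l k1])
  have r: "(u \<longlongrightarrow> u (-L)) (at_right (-L))"
    using continuous_on_Icc_at_rightD[OF assms(1)] L_pos by simp
  have "eventually (\<lambda>y. y \<in> {-L<..<L}) (at_right (-L))"
    by (rule eventually_at_right_real) (use L_pos in simp)
  then have "eventually (\<lambda>y. u y = k) (at_right (-L))"
    by eventually_elim (use assms(2) in auto)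
  then have k2: "(u \<longlongrightarrow> k) (at_right (-L))"
    by (rule tendsto_eventually)
  show "u (-L) = k" by (rule tendsto_unique[OF trivial_limit_at_right_real r k2])
qed


definition cd :: "real \<Rightarrow> real" where "cd x = da x * b x + a x * db x"
definition G0 :: "real \<Rightarrow> real" where "G0 v = G v - G m"

lemma G0_nonneg: "G0 v \<ge> 0" unfolding G0_def using G_min by simp
lemma G0_m: "G0 m = 0" "G0 (-m) = 0" unfolding G0_def using G_even by auto

lemma da_odd: "x \<in> {-L<..<L} \<Longrightarrow> da (-x) = - da x"
  by (rule even_deriv_odd[OF a_even a_deriv])
lemma db_odd: "x \<in> {-L<..<L} \<Longrightarrow> db (-x) = - db x"
  by (rule even_deriv_odd[OF b_even b_deriv])

lemma cd_odd: assumes "x \<in> {-L<..<L}" shows "cd (-x) = - cd x"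
proof -
  have "x \<in> {-L..L}" using assms by auto
  then show ?thesis unfolding cd_def using da_odd[OF assms] db_odd[OF assms] a_even b_even
    by (simp add: algebra_simps)
qed

lemma cd_nonneg: assumes "0 \<le> x" "x < L" shows "cd x \<ge> 0"
proof (cases "x = 0")
  case True
  have "cd (-0) = - cd 0" by (rule cd_odd) (use L_pos in auto)
  then show ?thesis using True by simp
next
  case False
  then show ?thesis using ab_mono assms unfolding cd_def by auto
qed

lemma cd_nonpos: assumes "-L < x" "x \<le> 0" shows "cd x \<le> 0"
proof -
  have "cd (-x) \<ge> 0" by (rule cd_nonneg) (use assms in auto)
  moreover have "cd (-x) = - cd x" by (rule cd_odd) (use assms L_pos in auto)
  ultimately show ?thesis by simp
qed

definition En :: "(real \<Rightarrow> real) \<Rightarrow> (real \<Rightarrow> real) \<Rightarrow> real \<Rightarrow> real" where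
  "En u w x = w x * w x / 2 - c x * G0 (u x)"

lemma G_isCont: "isCont G x" using DERIV_isCont G_deriv by blast

lemma En_deriv:
  assumes o: "osol u w" and x: "x \<in> {-L<..<L}"
  shows "(En u w has_real_derivative - (cd x * G0 (u x))) (at x)"
proof -
  have du: "(u has_real_derivative w x / a x) (at x)" by (rule osol_u_deriv[OF o x])
  have dw: "(w has_real_derivative b x * g (u x)) (at x)" by (rule osol_w_deriv[OF o x])
  have "((\<lambda>y. G (u y)) has_real_derivative g (u x) * (w x / a x)) (at x)"
    by (rule DERIV_chain2[OF G_deriv[rule_format] du])
  then have dG: "((\<lambda>y. G0 (u y)) has_real_derivative g (u x) * (w x / a x)) (at x)"
    unfolding G0_def using DERIV_diff[OF _ DERIV_const[of "G m"]] by fastforce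
  have dc: "(c has_real_derivative cd x) (at x)" using c_deriv[OF x] unfolding cd_def .
  have "x \<in> {-L..L}" using x by auto
  then have ax: "a x \<noteq> 0" using a_pos by (metis less_irrefl)
  show ?thesis
    using DERIV_diff[OF DERIV_cdivide[OF DERIV_mult[OF dw dw], of 2] DERIV_mult[OF dc dG]]
    unfolding En_def[abs_def]
    by (rule DERIV_cong) (use ax in \<open>simp add: c_def field_simps\<close>)
qed

lemma G0u_cont: assumes "osol u w" shows "continuous_on {-L..L} (\<lambda>y. c y * G0 (u y))"
proof -
  have "continuous_on {-L..L} (\<lambda>y. G (u y))"
    using continuous_on_compose2[OF continuous_at_imp_continuous_on[OF ballI[OF G_isCont]] osol_cont[OF assms], of UNIV]
    by simp
  then show ?thesis unfolding G0_def by (intro continuous_intros c_cont)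
qed

lemma En_nonneg:
  assumes bs: "bsol u w" and x: "x \<in> {-L<..<L}"
  shows "En u w x \<ge> 0"
proof (rule ccontr)
  assume neg: "\<not> En u w x \<ge> 0"
  have o: "osol u w" and uL: "u L = m" and umL: "u (-L) = -m" using bs unfolding bsol_def by auto
  define \<phi> where "\<phi> = (\<lambda>y. c y * G0 (u y))"
  have cphi: "continuous_on {-L..L} \<phi>" unfolding \<phi>_def by (rule G0u_cont[OF o])
  have phiL: "\<phi> L = 0" "\<phi> (-L) = 0" unfolding \<phi>_def using uL umL G0_m by auto
  define \<epsilon> where "\<epsilon> = - En u w x"
  have eps: "\<epsilon> > 0" using neg unfolding \<epsilon>_def by simp
  have Eb: "\<And>y. En u w y \<ge> - \<phi> y" unfolding En_def \<phi>_def by simp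
  show False
  proof (cases "x \<ge> 0")
    case True
    have "L \<in> {-L..L}" using L_pos by simp
    then obtain d where d: "d > 0" "\<forall>y\<in>{-L..L}. dist y L < d \<longrightarrow> dist (\<phi> y) (\<phi> L) < \<epsilon>"
      using cphi eps unfolding continuous_on_iff by blast
    define y where "y = max ((x + L) / 2) (L - d / 2)"
    have y1: "x < y" unfolding y_def using x by (simp add: less_max_iff_disj)
    have y2: "y < L" unfolding y_def using x d(1) by simp
    have y3: "L - d / 2 \<le> y" unfolding y_def by simp
    have y: "x < y" "y < L" "dist y L < d" using y1 y2 y3 d(1) by (auto simp: dist_real_def)
    have yI: "y \<in> {-L..L}" using y x by auto
    have "\<phi> y < \<epsilon>" using d(2) yI y(3) phiL by (auto simp: dist_real_def)
    then have "En u w y > En u w x" using Eb[of y] unfolding \<epsilon>_def by linarith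
    moreover have "En u w y \<le> En u w x"
    proof (rule DERIV_nonpos_imp_nonincreasing[of x y])
      show "x \<le> y" using y by simp
      fix t assume t: "x \<le> t" "t \<le> y"
      then have tI: "t \<in> {-L<..<L}" using x y by auto
      have "cd t \<ge> 0" by (rule cd_nonneg) (use t True y in auto)
      then have "- (cd t * G0 (u t)) \<le> 0" using G0_nonneg by simp
      then show "\<exists>z. (En u w has_real_derivative z) (at t) \<and> z \<le> 0"
        using En_deriv[OF o tI] by blast
    qed
    ultimately show False by simp
  next
    case False
    have "-L \<in> {-L..L}" using L_pos by simp
    then obtain d where d: "d > 0" "\<forall>y\<in>{-L..L}. dist y (-L) < d \<longrightarrow> dist (\<phi> y) (\<phi> (-L)) < \<epsilon>"
      using cphi eps unfolding continuous_on_iff by blast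
    define y where "y = min ((x - L) / 2) (-L + d / 2)"
    have y1: "y < x" unfolding y_def using x by (simp add: min_less_iff_disj)
    have y2: "-L < y" unfolding y_def using x d(1) by simp
    have y3: "y \<le> -L + d / 2" unfolding y_def by simp
    have y: "y < x" "-L < y" "dist y (-L) < d" using y1 y2 y3 d(1) by (auto simp: dist_real_def)
    have yI: "y \<in> {-L..L}" using y x by auto
    have "\<phi> y < \<epsilon>" using d(2) yI y(3) phiL by (auto simp: dist_real_def)
    then have "En u w y > En u w x" using Eb[of y] unfolding \<epsilon>_def by linarith
    moreover have "En u w y \<le> En u w x"
    proof (rule DERIV_nonneg_imp_nondecreasing[of y x])
      show "y \<le> x" using y by simp
      fix t assume t: "y \<le> t" "t \<le> x"
      then have tI: "t \<in> {-L<..<L}" using x y by auto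
      have "cd t \<le> 0" by (rule cd_nonpos) (use t False y in auto)
      then have "- (cd t * G0 (u t)) \<ge> 0" using G0_nonneg by (simp add: mult_nonpos_nonneg)
      then show "\<exists>z. (En u w has_real_derivative z) (at t) \<and> z \<ge> 0"
        using En_deriv[OF o tI] by blast
    qed
    ultimately show False by simp
  qed
qed

lemma w_ne0:
  assumes bs: "bsol u w" and x: "x \<in> {-L<..<L}"
  shows "w x \<noteq> 0"
proof
  assume w0: "w x = 0"
  have o: "osol u w" and uL: "u L = m" and umL: "u (-L) = -m" using bs unfolding bsol_def by auto
  have xI: "x \<in> {-L..L}" using x by auto
  have "En u w x \<ge> 0" by (rule En_nonneg[OF bs x])
  then have "c x * G0 (u x) \<le> 0" unfolding En_def using w0 by simp
  moreover have "c x > 0" by (rule c_pos[OF xI])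
  ultimately have "G0 (u x) \<le> 0" by (simp add: mult_le_0_iff)
  then have "G (u x) = G m" using G0_nonneg[of "u x"] unfolding G0_def by simp
  then have gu: "g (u x) = 0" by (rule g_at_min)
  have oc: "osol (\<lambda>_. u x) (\<lambda>_. 0)"
    unfolding osol_def using gu by (auto intro!: derivative_eq_intros)
  have "\<forall>y\<in>{-L<..<L}. u y = u x"
    using ivp_unique[OF o oc x] w0 by auto
  from const_interior_endpoints[OF osol_cont[OF o] this] uL umL m_pos show False by simp
qed

lemma w_pos:
  assumes bs: "bsol u w" and x: "x \<in> {-L<..<L}"
  shows "w x > 0"
proof (rule ccontr)
  assume "\<not> w x > 0"
  then have wx: "w x < 0" using w_ne0[OF bs x] by simp
  have o: "osol u w" and uL: "u L = m" and umL: "u (-L) = -m" using bs unfolding bsol_def by auto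
  have "-L < L" using L_pos by simp
  moreover have "\<And>t. -L < t \<Longrightarrow> t < L \<Longrightarrow> u differentiable at t"
  proof -
    fix t assume "-L < t" "t < L"
    then have tI: "t \<in> {-L<..<L}" by auto
    show "u differentiable at t" using osol_u_deriv[OF o tI] unfolding real_differentiable_def by blast
  qed
  ultimately obtain l z where z: "-L < z" "z < L" "(u has_real_derivative l) (at z)" "u L - u (-L) = (L - -L) * l"
    using MVT[OF _ osol_cont[OF o]] by blast
  have zI: "z \<in> {-L<..<L}" using z by auto
  have "l = w z / a z" using DERIV_unique[OF z(3) osol_u_deriv[OF o zI]] .
  moreover have "l > 0"
  proof -
    have "(2 * L) * l = 2 * m" using z(4) uL umL by simp
    then have "(2 * L) * l > 0" using m_pos by simp
    then show ?thesis using L_pos by (simp add: zero_less_mult_iff)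
  qed
  moreover have "a z > 0" using a_pos z by auto
  ultimately have wz: "w z > 0" by (simp add: zero_less_divide_iff)
  have cw: "continuous_on {min x z..max x z} w"
    using osol_w_cont[OF o] by (rule continuous_on_subset) (use x z in auto)
  obtain t where t: "t \<in> {min x z..max x z}" "w t = 0"
  proof (cases "x \<le> z")
    case True
    then show ?thesis using IVT'[of w x 0 z] cw wx wz that by (auto simp: min_def max_def)
  next
    case False
    then show ?thesis using IVT2'[of w x 0 z] cw wx wz that by (auto simp: min_def max_def)
  qed
  have "t \<in> {-L<..<L}" using t(1) x z by auto
  then show False using w_ne0[OF bs] t(2) by blast
qed

lemma bsol_strict_mono:
  assumes bs: "bsol u w"
  shows "strict_mono_on {-L..L} u"
proof (rule strict_mono_onI)
  fix x y assume x: "x \<in> {-L..L}" and y: "y \<in> {-L..L}" and xy: "x < y"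
  have o: "osol u w" using bs unfolding bsol_def by auto
  have "\<And>t. x < t \<Longrightarrow> t < y \<Longrightarrow> u differentiable at t"
  proof -
    fix t assume "x < t" "t < y"
    then have tI: "t \<in> {-L<..<L}" using x y by auto
    show "u differentiable at t" using osol_u_deriv[OF o tI] unfolding real_differentiable_def by blast
  qed
  moreover have "continuous_on {x..y} u" using osol_cont[OF o] by (rule continuous_on_subset) (use x y in auto)
  ultimately obtain l z where z: "x < z" "z < y" "(u has_real_derivative l) (at z)" "u y - u x = (y - x) * l"
    using MVT[OF xy] by blast
  have zI: "z \<in> {-L<..<L}" using z x y by auto
  have "l = w z / a z" using DERIV_unique[OF z(3) osol_u_deriv[OF o zI]] .
  moreover have "a z > 0" using a_pos zI by auto
  moreover have "w z > 0" by (rule w_pos[OF bs zI])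
  ultimately have "l > 0" by simp
  then show "u x < u y" using z(4) xy by (smt (verit) mult_pos_pos)
qed


lemma osol_reflect:
  assumes o: "osol u w" shows "osol (\<lambda>x. - u (-x)) (\<lambda>x. w (-x))"
  unfolding osol_def
proof (intro conjI ballI)
  have "continuous_on {-L..L} (\<lambda>x. u (-x))"
    by (rule continuous_on_compose2[OF osol_cont[OF o] continuous_on_minus[OF continuous_on_id]]) auto
  then show "continuous_on {-L..L} (\<lambda>x. - u (-x))" by (rule continuous_on_minus)
  fix x assume x: "x \<in> {-L<..<L}"
  then have mx: "-x \<in> {-L<..<L}" by auto
  have xI: "x \<in> {-L..L}" using x by auto
  have "((\<lambda>y. u (-y)) has_real_derivative (w (-x) / a (-x)) * (-1)) (at x)"
    by (rule DERIV_chain2[where f=u and g="\<lambda>y. -y"]) (use osol_u_deriv[OF o mx] in \<open>auto intro!: derivative_eq_intros\<close>)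
  from DERIV_minus[OF this] show "((\<lambda>x. - u (-x)) has_real_derivative w (-x) / a x) (at x)"
    using a_even xI by simp
  have "((\<lambda>y. w (-y)) has_real_derivative (b (-x) * g (u (-x))) * (-1)) (at x)"
    by (rule DERIV_chain2[where f=w and g="\<lambda>y. -y"]) (use osol_w_deriv[OF o mx] in \<open>auto intro!: derivative_eq_intros\<close>)
  moreover have "b (-x) * g (u (-x)) * (-1) = b x * g (- u (- x))"
    using b_even xI g_odd[of "u (-x)"] by simp
  ultimately show "((\<lambda>x. w (-x)) has_real_derivative b x * g (- u (- x))) (at x)" by simp
qed

lemma bsol_reflect:
  assumes "bsol u w" shows "bsol (\<lambda>x. - u (-x)) (\<lambda>x. w (-x))"
  using assms osol_reflect unfolding bsol_def by auto

lemma strict_incr_MVT: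
  fixes f f' :: "real \<Rightarrow> real"
  assumes "x < y" "continuous_on {x..y} f"
    and "\<And>t. x < t \<Longrightarrow> t < y \<Longrightarrow> (f has_real_derivative f' t) (at t) \<and> f' t > 0"
  shows "f x < f y"
proof -
  have "\<And>t. x < t \<Longrightarrow> t < y \<Longrightarrow> f differentiable at t"
    using assms(3) unfolding real_differentiable_def by blast
  then obtain l z where z: "x < z" "z < y" "(f has_real_derivative l) (at z)" "f y - f x = (y - x) * l"
    using MVT[OF assms(1,2)] by blast
  have "l = f' z" using DERIV_unique[OF z(3)] assms(3)[OF z(1,2)] by blast
  then have "l > 0" using assms(3)[OF z(1,2)] by simp
  then show ?thesis using z(4) assms(1) by (smt (verit) mult_pos_pos)
qed

lemma core:
  fixes D P D' P' :: "real \<Rightarrow> real"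
  assumes s0m: "st < m'"
    and dD: "\<And>s. st \<le> s \<Longrightarrow> s < m' \<Longrightarrow> (D has_real_derivative D' s) (at s)"
    and dP: "\<And>s. st \<le> s \<Longrightarrow> s < m' \<Longrightarrow> (P has_real_derivative P' s) (at s)"
    and cD: "continuous_on {st..m'} D"
    and h1: "\<And>s. st \<le> s \<Longrightarrow> s < m' \<Longrightarrow> D s \<ge> 0 \<Longrightarrow> P' s \<ge> 0"
    and h2: "\<And>s. st \<le> s \<Longrightarrow> s < m' \<Longrightarrow> P s \<ge> 0 \<Longrightarrow> D' s \<ge> 0"
    and h3: "\<And>s. st \<le> s \<Longrightarrow> s < m' \<Longrightarrow> P s > 0 \<Longrightarrow> D' s > 0"
    and i1: "D st \<ge> 0" and i2: "P st \<ge> 0" and i3: "D st > 0 \<or> P st > 0"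
  shows "D m' > 0"
proof -
  have contP: "\<And>x y. st \<le> x \<Longrightarrow> y < m' \<Longrightarrow> continuous_on {x..y} P"
  proof (intro continuous_at_imp_continuous_on ballI)
    fix x y t assume "st \<le> x" "y < m'" "t \<in> {x..y}"
    then show "isCont P t" using DERIV_isCont[OF dP[of t]] by auto
  qed
  have contD: "\<And>x y. st \<le> x \<Longrightarrow> y \<le> m' \<Longrightarrow> continuous_on {x..y} D"
    using cD by (rule continuous_on_subset) auto
  obtain s1 where s1: "st \<le> s1" "s1 < m'" "D s1 > 0" "P s1 \<ge> 0"
  proof (cases "D st > 0")
    case True then show ?thesis using that[of st] s0m i2 by auto
  next
    case False
    then have Pp: "P st > 0" using i3 by simp
    have "isCont P st" using dP[of st] s0m DERIV_isCont by auto
    then have "(P \<longlongrightarrow> P st) (at st)" by (simp add: isCont_def)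
    then have "eventually (\<lambda>x. P x > 0) (at st)" using Pp by (rule order_tendstoD)
    then obtain \<delta> where \<delta>: "\<delta> > 0" "\<And>x. x \<noteq> st \<Longrightarrow> dist x st < \<delta> \<Longrightarrow> P x > 0"
      unfolding eventually_at by blast
    define s1 where "s1 = min (st + \<delta> / 2) ((st + m') / 2)"
    have s1p: "st < s1" "s1 < m'" "s1 - st < \<delta>" using \<delta>(1) s0m unfolding s1_def
      by (auto simp: min_less_iff_disj)
    have Ppos: "\<And>t. st \<le> t \<Longrightarrow> t \<le> s1 \<Longrightarrow> P t > 0"
    proof -
      fix t assume t: "st \<le> t" "t \<le> s1"
      show "P t > 0"
      proof (cases "t = st")
        case True then show ?thesis using Pp by simp
      next
        case False then show ?thesis using \<delta>(2)[of t] t s1p by (auto simp: dist_real_def)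
      qed
    qed
    have "D st < D s1"
    proof (rule strict_incr_MVT[OF s1p(1) contD])
      fix t assume "st < t" "t < s1"
      then show "(D has_real_derivative D' t) (at t) \<and> D' t > 0"
        using dD h3 Ppos s1p by auto
    qed (use s1p in auto)
    then show ?thesis using that[of s1] s1p i1 Ppos[of s1] by auto
  qed
  have Dpos: "\<And>s. s1 \<le> s \<Longrightarrow> s < m' \<Longrightarrow> D s > 0"
  proof (rule ccontr)
    fix s2 assume s2: "s1 \<le> s2" "s2 < m'" "\<not> D s2 > 0"
    define Z where "Z = {s1..s2} \<inter> D -` {..0}"
    have cZ: "closed Z" unfolding Z_def
      by (rule continuous_closed_preimage[OF contD]) (use s1 s2 in auto)
    have s2Z: "s2 \<in> Z" unfolding Z_def using s2 by auto
    have bb: "bdd_below Z" unfolding Z_def by (rule bdd_belowI[of _ s1]) auto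
    define s3 where "s3 = Inf Z"
    have s3Z: "s3 \<in> Z" unfolding s3_def using closed_contains_Inf[OF _ bb cZ] s2Z by blast
    have s3r: "s1 \<le> s3" "s3 \<le> s2" "D s3 \<le> 0" using s3Z unfolding Z_def by auto
    have below: "\<And>t. s1 \<le> t \<Longrightarrow> t < s3 \<Longrightarrow> D t > 0"
    proof (rule ccontr)
      fix t assume t: "s1 \<le> t" "t < s3" "\<not> D t > 0"
      then have "t \<in> Z" unfolding Z_def using s3r by auto
      then have "s3 \<le> t" unfolding s3_def by (rule cInf_lower[OF _ bb])
      then show False using t by simp
    qed
    have s13: "s1 < s3" using s3r s1(3) by (cases "s1 = s3") auto
    have Pge: "\<And>t. s1 \<le> t \<Longrightarrow> t \<le> s3 \<Longrightarrow> P s1 \<le> P t"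
    proof -
      fix t assume t: "s1 \<le> t" "t \<le> s3"
      show "P s1 \<le> P t"
      proof (rule DERIV_nonneg_imp_increasing_open[OF t(1)])
        fix r assume r: "s1 < r" "r < t"
        have r1: "st \<le> r" "r < m'" using r s1 t s3r s2 by auto
        have "D r > 0" using below r t by auto
        then show "\<exists>y. (P has_real_derivative y) (at r) \<and> 0 \<le> y"
          using dP[OF r1] h1[OF r1] by auto
      next
        show "continuous_on {s1..t} P" using contP s1 t s3r s2 by auto
      qed
    qed
    have "D s1 \<le> D s3"
    proof (rule DERIV_nonneg_imp_increasing_open[OF s3r(1)])
      fix r assume r: "s1 < r" "r < s3"
      have "P r \<ge> 0" using Pge[of r] r s1(4) by auto
      moreover have r1: "st \<le> r" "r < m'" using r s1 s3r s2 by auto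
      ultimately show "\<exists>y. (D has_real_derivative y) (at r) \<and> 0 \<le> y"
        using dD[OF r1] h2[OF r1] by auto
    next
      show "continuous_on {s1..s3} D" using contD s1 s3r s2 by auto
    qed
    then show False using s1(3) s3r(3) by simp
  qed
  have Pnn: "\<And>t. s1 \<le> t \<Longrightarrow> t < m' \<Longrightarrow> P t \<ge> 0"
  proof -
    fix t assume t: "s1 \<le> t" "t < m'"
    have "P s1 \<le> P t"
    proof (rule DERIV_nonneg_imp_increasing_open[OF t(1)])
      fix r assume r: "s1 < r" "r < t"
      have r1: "st \<le> r" "r < m'" using r s1 t by auto
      have "D r > 0" using Dpos r t by auto
      then show "\<exists>y. (P has_real_derivative y) (at r) \<and> 0 \<le> y"
        using dP[OF r1] h1[OF r1] by auto
    next
      show "continuous_on {s1..t} P" using contP s1 t by auto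
    qed
    then show "P t \<ge> 0" using s1 by simp
  qed
  have "D s1 \<le> D m'"
  proof (rule DERIV_nonneg_imp_increasing_open[of s1 m'])
    show "s1 \<le> m'" using s1 by simp
    fix r assume r: "s1 < r" "r < m'"
    have r1: "st \<le> r" "r < m'" using r s1 by auto
    have "P r \<ge> 0" using Pnn r by auto
    then show "\<exists>y. (D has_real_derivative y) (at r) \<and> 0 \<le> y"
      using dD[OF r1] h2[OF r1] by auto
  next
    show "continuous_on {s1..m'} D" using contD s1 by auto
  qed
  then show ?thesis using s1 by simp
qed


definition Tf :: "real \<Rightarrow> real" where "Tf x = integral {-L..x} (\<lambda>y. 1 / a y)"

lemma inva_cont: "continuous_on {-L..L} (\<lambda>y. 1 / a y)"
  using a_pos by (intro continuous_intros a_cont) auto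

lemma Tf_deriv_within: "x \<in> {-L..L} \<Longrightarrow> (Tf has_real_derivative 1 / a x) (at x within {-L..L})"
  unfolding Tf_def[abs_def] by (rule integral_has_real_derivative[OF inva_cont])

lemma Tf_deriv: "x \<in> {-L<..<L} \<Longrightarrow> (Tf has_real_derivative 1 / a x) (at x)"
  using Tf_deriv_within[of x] at_within_Icc_at[of "-L" x L] by auto

lemma Tf_cont: "continuous_on {-L..L} Tf"
  using Tf_deriv_within by (rule DERIV_continuous_on)

lemma Tf_strict: assumes "x \<in> {-L..L}" "y \<in> {-L..L}" "x < y" shows "Tf x < Tf y"
proof (rule strict_incr_MVT[OF assms(3)])
  show "continuous_on {x..y} Tf" using Tf_cont by (rule continuous_on_subset) (use assms in auto)
  fix t assume "x < t" "t < y"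
  then have t: "t \<in> {-L<..<L}" using assms by auto
  then have "a t > 0" using a_pos by auto
  then show "(Tf has_real_derivative 1 / a t) (at t) \<and> 1 / a t > 0" using Tf_deriv[OF t] by simp
qed

lemma Tf_le_iff: assumes "x \<in> {-L..L}" "y \<in> {-L..L}" shows "Tf x \<le> Tf y \<longleftrightarrow> x \<le> y"
proof
  assume h: "Tf x \<le> Tf y"
  show "x \<le> y"
  proof (rule ccontr)
    assume "\<not> x \<le> y"
    then have "Tf y < Tf x" using Tf_strict[OF assms(2,1)] by simp
    then show False using h by simp
  qed
next
  assume "x \<le> y"
  then show "Tf x \<le> Tf y" using Tf_strict[OF assms] by (cases "x = y") auto
qed

definition Xi :: "(real \<Rightarrow> real) \<Rightarrow> real \<Rightarrow> real" where "Xi u = inv_into {-L..L} u"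

context
  fixes u w assumes bs: "bsol u w"
begin

lemma bs_o: "osol u w" using bs unfolding bsol_def by auto
lemma bs_L: "u L = m" "u (-L) = -m" using bs unfolding bsol_def by auto
lemma bs_mono: "strict_mono_on {-L..L} u" by (rule bsol_strict_mono[OF bs])
lemma bs_inj: "inj_on u {-L..L}" using bs_mono by (rule strict_mono_on_imp_inj_on)

lemma bs_img: "u ` {-L..L} = {-m..m}"
proof
  show "u ` {-L..L} \<subseteq> {-m..m}"
  proof
    fix y assume "y \<in> u ` {-L..L}"
    then obtain x where x: "x \<in> {-L..L}" "y = u x" by auto
    have "u (-L) \<le> u x" using bs_mono x L_pos by (cases "x = -L") (auto simp: strict_mono_on_def intro: less_imp_le)
    moreover have "u x \<le> u L" using bs_mono x L_pos by (cases "x = L") (auto simp: strict_mono_on_def intro: less_imp_le)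
    ultimately show "y \<in> {-m..m}" using x bs_L by auto
  qed
  show "{-m..m} \<subseteq> u ` {-L..L}"
  proof
    fix y assume "y \<in> {-m..m}"
    then obtain x where "x \<ge> -L" "x \<le> L" "u x = y"
      using IVT'[of u "-L" y L] bs_L osol_cont[OF bs_o] L_pos by auto
    then show "y \<in> u ` {-L..L}" by force
  qed
qed

lemma Xi_in: assumes "s \<in> {-m..m}" shows "Xi u s \<in> {-L..L}" "u (Xi u s) = s"
proof -
  have "s \<in> u ` {-L..L}" using assms bs_img by simp
  then show "Xi u s \<in> {-L..L}" "u (Xi u s) = s" unfolding Xi_def
    by (rule inv_into_into, rule f_inv_into_f)
qed

lemma Xi_u: "x \<in> {-L..L} \<Longrightarrow> Xi u (u x) = x"
  unfolding Xi_def using bs_inj by (rule inv_into_f_f)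

lemma Xi_m: "Xi u m = L" "Xi u (-m) = -L"
  using Xi_u[of L] Xi_u[of "-L"] bs_L L_pos by auto

lemma Xi_cont: "continuous_on {-m..m} (Xi u)"
  using continuous_on_inv[OF osol_cont[OF bs_o] compact_Icc, of "Xi u"] Xi_u bs_img by auto

lemma Xi_open: assumes "s \<in> {-m<..<m}" shows "Xi u s \<in> {-L<..<L}"
proof -
  have s: "s \<in> {-m..m}" using assms by auto
  have "Xi u s \<noteq> L" using Xi_in(2)[OF s] bs_L assms by auto
  moreover have "Xi u s \<noteq> -L" using Xi_in(2)[OF s] bs_L assms by auto
  ultimately show ?thesis using Xi_in(1)[OF s] by auto
qed

lemma Xi_le: assumes "s \<in> {-m..m}" "t \<in> {-m..m}" "s \<le> t" shows "Xi u s \<le> Xi u t"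
proof (rule ccontr)
  assume "\<not> Xi u s \<le> Xi u t"
  then have "u (Xi u t) < u (Xi u s)" using bs_mono Xi_in(1)[OF assms(1)] Xi_in(1)[OF assms(2)]
    by (auto simp: strict_mono_on_def)
  then show False using Xi_in(2)[OF assms(1)] Xi_in(2)[OF assms(2)] assms(3) by simp
qed

lemma Xi_deriv: assumes s: "s \<in> {-m<..<m}"
  shows "(Xi u has_real_derivative a (Xi u s) / w (Xi u s)) (at s)"
proof -
  have XI: "Xi u s \<in> {-L<..<L}" by (rule Xi_open[OF s])
  have wp: "w (Xi u s) > 0" by (rule w_pos[OF bs XI])
  have ap: "a (Xi u s) > 0" using a_pos XI by auto
  have "isCont (Xi u) s"
    using continuous_on_interior[OF Xi_cont, of s] s by simp
  then have "(Xi u has_real_derivative inverse (w (Xi u s) / a (Xi u s))) (at s)"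
    by (intro DERIV_inverse_function[where f=u and g="Xi u" and a="-m" and b=m, OF osol_u_deriv[OF bs_o XI]])
       (use wp ap s Xi_in(2) in auto)
  then show ?thesis by simp
qed

definition tau :: "real \<Rightarrow> real" where "tau s = Tf (Xi u s)"
definition Qf :: "real \<Rightarrow> real" where "Qf s = w (Xi u s) * w (Xi u s) / 2"

lemma tau_deriv: assumes s: "s \<in> {-m<..<m}"
  shows "(tau has_real_derivative 1 / w (Xi u s)) (at s)"
proof -
  have XI: "Xi u s \<in> {-L<..<L}" by (rule Xi_open[OF s])
  have ap: "a (Xi u s) > 0" using a_pos XI by auto
  have "(tau has_real_derivative (1 / a (Xi u s)) * (a (Xi u s) / w (Xi u s))) (at s)"
    unfolding tau_def[abs_def] by (rule DERIV_chain2[OF Tf_deriv[OF XI] Xi_deriv[OF s]])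
  then show ?thesis using ap by simp
qed

lemma tau_cont: "continuous_on {-m..m} tau"
  unfolding tau_def[abs_def]
  by (rule continuous_on_compose2[OF Tf_cont Xi_cont]) (use Xi_in(1) in auto)

lemma tau_m: "tau m = Tf L" unfolding tau_def using Xi_m by simp

lemma Qf_deriv: assumes s: "s \<in> {-m<..<m}"
  shows "(Qf has_real_derivative c (Xi u s) * g s) (at s)"
proof -
  have XI: "Xi u s \<in> {-L<..<L}" by (rule Xi_open[OF s])
  have wp: "w (Xi u s) > 0" by (rule w_pos[OF bs XI])
  have ap: "a (Xi u s) > 0" using a_pos XI by auto
  have us: "u (Xi u s) = s" using Xi_in(2) s by auto
  have d: "((\<lambda>t. w (Xi u t)) has_real_derivative (b (Xi u s) * g (u (Xi u s))) * (a (Xi u s) / w (Xi u s))) (at s)"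
    by (rule DERIV_chain2[OF osol_w_deriv[OF bs_o XI] Xi_deriv[OF s]])
  show ?thesis
    using DERIV_cdivide[OF DERIV_mult[OF d d], of 2] unfolding Qf_def[abs_def]
    by (rule DERIV_cong) (use wp ap us in \<open>simp add: c_def field_simps\<close>)
qed

end

lemma compare:
  assumes bh: "bsol h wh" and bl: "bsol l wl"
    and s0: "0 \<le> s0" "s0 < m"
    and x0: "0 \<le> Xi h s0" "Xi h s0 \<le> Xi l s0"
    and q0: "Qf l wl s0 \<le> Qf h wh s0"
    and st: "Xi h s0 < Xi l s0 \<or> Qf l wl s0 < Qf h wh s0"
  shows False
proof -
  define D where "D = (\<lambda>s. tau l s - tau h s)"
  define P where "P = (\<lambda>s. Qf h wh s - Qf l wl s)"
  define D' where "D' = (\<lambda>s. 1 / wl (Xi l s) - 1 / wh (Xi h s))"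
  define P' where "P' = (\<lambda>s. c (Xi h s) * g s - c (Xi l s) * g s)"
  have sI: "\<And>s. s0 \<le> s \<Longrightarrow> s < m \<Longrightarrow> s \<in> {-m<..<m}" using s0 m_pos by auto
  have sI2: "\<And>s. s0 \<le> s \<Longrightarrow> s < m \<Longrightarrow> s \<in> {-m..m}" using s0 m_pos by auto
  have s0I: "s0 \<in> {-m..m}" using s0 m_pos by auto
  have "D m > 0"
  proof (rule core[where D = D and P = P and D' = D' and P' = P' and st = s0 and m' = m])
    show "s0 < m" by (rule s0(2))
    fix s assume s: "s0 \<le> s" "s < m"
    show "(D has_real_derivative D' s) (at s)"
      unfolding D_def D'_def using tau_deriv[OF bl sI[OF s]] tau_deriv[OF bh sI[OF s]] by (rule DERIV_diff)
    show "(P has_real_derivative P' s) (at s)"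
      unfolding P_def P'_def using Qf_deriv[OF bh sI[OF s]] Qf_deriv[OF bl sI[OF s]] by (rule DERIV_diff)
    have XhI: "Xi h s \<in> {-L<..<L}" by (rule Xi_open[OF bh sI[OF s]])
    have XlI: "Xi l s \<in> {-L<..<L}" by (rule Xi_open[OF bl sI[OF s]])
    have wh: "wh (Xi h s) > 0" by (rule w_pos[OF bh XhI])
    have wl: "wl (Xi l s) > 0" by (rule w_pos[OF bl XlI])
    have Xh0: "0 \<le> Xi h s" using Xi_le[OF bh s0I sI2[OF s] s(1)] x0 by simp
    {
      assume "D s \<ge> 0"
      then have "Tf (Xi h s) \<le> Tf (Xi l s)" unfolding D_def tau_def[OF bl] tau_def[OF bh] by simp
      then have "Xi h s \<le> Xi l s" using Tf_le_iff XhI XlI by auto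
      then have "c (Xi h s) \<le> c (Xi l s)" using c_mono Xh0 XlI by auto
      moreover have "g s \<le> 0" using g_nonpos s s0 g0 by (cases "s = 0") auto
      ultimately have "0 \<le> (c (Xi h s) - c (Xi l s)) * g s"
        by (intro mult_nonpos_nonpos) auto
      then show "P' s \<ge> 0" unfolding P'_def by (simp add: left_diff_distrib)
    }
    {
      assume "P s \<ge> 0"
      then have "wl (Xi l s) * wl (Xi l s) \<le> wh (Xi h s) * wh (Xi h s)"
        unfolding P_def Qf_def[OF bh] Qf_def[OF bl] by simp
      then have "wl (Xi l s) \<le> wh (Xi h s)"
      proof (rule contrapos_pp)
        assume "\<not> wl (Xi l s) \<le> wh (Xi h s)"
        then have "wh (Xi h s) * wh (Xi h s) < wl (Xi l s) * wl (Xi l s)"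
          using wh by (intro mult_strict_mono) auto
        then show "\<not> wl (Xi l s) * wl (Xi l s) \<le> wh (Xi h s) * wh (Xi h s)" by simp
      qed
      then show "D' s \<ge> 0" unfolding D'_def using wh wl by (simp add: frac_le)
    }
    {
      assume "P s > 0"
      then have "wl (Xi l s) * wl (Xi l s) < wh (Xi h s) * wh (Xi h s)"
        unfolding P_def Qf_def[OF bh] Qf_def[OF bl] by simp
      then have "wl (Xi l s) < wh (Xi h s)"
      proof (rule contrapos_pp)
        assume "\<not> wl (Xi l s) < wh (Xi h s)"
        then have "wh (Xi h s) * wh (Xi h s) \<le> wl (Xi l s) * wl (Xi l s)"
          using wh by (intro mult_mono) auto
        then show "\<not> wl (Xi l s) * wl (Xi l s) < wh (Xi h s) * wh (Xi h s)" by simp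
      qed
      then show "D' s > 0" unfolding D'_def using wh wl by (simp add: frac_less2)
    }
  next
    show "continuous_on {s0..m} D" unfolding D_def
      by (intro continuous_intros continuous_on_subset[OF tau_cont[OF bl]] continuous_on_subset[OF tau_cont[OF bh]])
         (use s0 in auto)
    show "D s0 \<ge> 0" unfolding D_def tau_def[OF bl] tau_def[OF bh]
      using Tf_le_iff Xi_in(1)[OF bh s0I] Xi_in(1)[OF bl s0I] x0 by auto
    show "P s0 \<ge> 0" unfolding P_def using q0 by simp
    show "D s0 > 0 \<or> P s0 > 0" unfolding D_def P_def tau_def[OF bl] tau_def[OF bh]
      using Tf_strict Xi_in(1)[OF bh s0I] Xi_in(1)[OF bl s0I] st by auto
  qed
  moreover have "D m = 0" unfolding D_def using tau_m[OF bl] tau_m[OF bh] by simp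
  ultimately show False by simp
qed


lemma Qsym:
  assumes bs: "bsol u w" and s1: "0 \<le> s1" "s1 < m" and X1: "Xi u s1 \<le> 0"
  shows "Qf u w (-s1) \<le> Qf u w s1"
proof -
  define R where "R = (\<lambda>s. Qf u w s - Qf u w (-s))"
  have rI: "\<And>r. 0 \<le> r \<Longrightarrow> r \<le> s1 \<Longrightarrow> r \<in> {-m<..<m} \<and> -r \<in> {-m<..<m}" using s1 m_pos by auto
  have dR: "\<And>r. 0 \<le> r \<Longrightarrow> r \<le> s1 \<Longrightarrow>
      (R has_real_derivative c (Xi u r) * g r - c (Xi u (-r)) * g r) (at r)"
  proof -
    fix r assume r: "0 \<le> r" "r \<le> s1"
    have d1: "(Qf u w has_real_derivative c (Xi u r) * g r) (at r)"
      using Qf_deriv[OF bs] rI[OF r] by blast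
    have d2: "((\<lambda>s. Qf u w (-s)) has_real_derivative (c (Xi u (-r)) * g (-r)) * (-1)) (at r)"
      by (rule DERIV_chain2[where f="Qf u w" and g="\<lambda>y. -y"])
         (use Qf_deriv[OF bs] rI[OF r] in \<open>auto intro!: derivative_eq_intros\<close>)
    show "(R has_real_derivative c (Xi u r) * g r - c (Xi u (-r)) * g r) (at r)"
      unfolding R_def using DERIV_diff[OF d1 d2] g_odd[of r] by simp
  qed
  have "R 0 \<le> R s1"
  proof (rule DERIV_nonneg_imp_increasing_open[OF s1(1)])
    fix r assume r: "0 < r" "r < s1"
    have rr: "r \<in> {-m..m}" "-r \<in> {-m..m}" "s1 \<in> {-m..m}" using r s1 by auto
    have x1: "Xi u (-r) \<le> Xi u r" using Xi_le[OF bs rr(2) rr(1)] r by simp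
    have x2: "Xi u r \<le> Xi u s1" using Xi_le[OF bs rr(1) rr(3)] r by simp
    have "c (Xi u r) \<le> c (Xi u (-r))"
      by (rule c_mono_abs) (use Xi_in(1)[OF bs rr(1)] Xi_in(1)[OF bs rr(2)] x1 x2 X1 in auto)
    moreover have "g r \<le> 0" using g_nonpos r s1 by auto
    ultimately have "0 \<le> (c (Xi u r) - c (Xi u (-r))) * g r"
      by (intro mult_nonpos_nonpos) auto
    then have "0 \<le> c (Xi u r) * g r - c (Xi u (-r)) * g r" by (simp add: left_diff_distrib)
    then show "\<exists>y. (R has_real_derivative y) (at r) \<and> 0 \<le> y" using dR[of r] r by auto
  next
    show "continuous_on {0..s1} R"
    proof (intro continuous_at_imp_continuous_on ballI)
      fix r assume "r \<in> {0..s1}"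
      then show "isCont R r" using DERIV_isCont[OF dR[of r]] by auto
    qed
  qed
  then show ?thesis unfolding R_def by simp
qed

lemma u0_nonpos:
  assumes bs: "bsol u w" shows "u 0 \<le> 0"
proof (rule ccontr)
  assume "\<not> u 0 \<le> 0"
  then have u0p: "u 0 > 0" by simp
  define u0 where "u0 = u 0"
  have o: "osol u w" and uL: "u L = m" and umL: "u (-L) = -m" using bs unfolding bsol_def by auto
  have zI: "(0::real) \<in> {-L..L}" "L \<in> {-L..L}" using L_pos by auto
  have "u 0 < u L" using bsol_strict_mono[OF bs] zI L_pos by (auto simp: strict_mono_on_def)
  then have u0m: "u0 < m" "0 < u0" using uL u0p unfolding u0_def by auto
  define ur where "ur = (\<lambda>x. - u (-x))"
  define wr where "wr = (\<lambda>x. w (-x))"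
  have br: "bsol ur wr" unfolding ur_def wr_def by (rule bsol_reflect[OF bs])
  have mu0: "-u0 \<in> {-m..m}" "u0 \<in> {-m..m}" using u0m by auto
  define t1 where "t1 = Xi u (-u0)"
  have t1I: "t1 \<in> {-L..L}" "u t1 = -u0" using Xi_in[OF bs mu0(1)] unfolding t1_def by auto
  have t1n: "t1 < 0"
  proof (rule ccontr)
    assume "\<not> t1 < 0"
    then have "0 \<le> t1" by simp
    then have "u 0 \<le> u t1"
    proof (cases "t1 = 0")
      case False
      then have "0 < t1" using \<open>0 \<le> t1\<close> by simp
      then show ?thesis using strict_mono_onD[OF bsol_strict_mono[OF bs] zI(1) t1I(1)] by simp
    qed simp
    then show False using t1I u0m unfolding u0_def by simp
  qed
  have Xu: "Xi u u0 = 0" using Xi_u[OF bs zI(1)] unfolding u0_def by simp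
  have mt1: "-t1 \<in> {-L..L}" using t1I by auto
  have "ur (-t1) = u0" unfolding ur_def using t1I by simp
  then have Xr: "Xi ur u0 = -t1" using Xi_u[OF br mt1] by simp
  have Qr: "Qf ur wr u0 = Qf u w (-u0)"
    unfolding Qf_def[OF br] Qf_def[OF bs] using Xr by (simp add: wr_def t1_def[symmetric])
  have "Qf u w (-u0) \<le> Qf u w u0" by (rule Qsym[OF bs]) (use u0m Xu in auto)
  then show False
    using compare[OF bs br, of u0] u0m Xu Xr t1n Qr by auto
qed

lemma u0_zero:
  assumes bs: "bsol u w" shows "u 0 = 0"
proof -
  have "(\<lambda>x. - u (-x)) 0 \<le> 0" by (rule u0_nonpos[OF bsol_reflect[OF bs]])
  then show ?thesis using u0_nonpos[OF bs] by simp
qed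

lemma bsol_unique:
  assumes bu: "bsol u wu" and bv: "bsol v wv" and x: "x \<in> {-L..L}"
  shows "u x = v x"
proof -
  have zI: "(0::real) \<in> {-L..L}" "(0::real) \<in> {-L<..<L}" using L_pos by auto
  have u0: "u 0 = 0" by (rule u0_zero[OF bu])
  have v0: "v 0 = 0" by (rule u0_zero[OF bv])
  have Xu: "Xi u 0 = 0" using Xi_u[OF bu zI(1)] u0 by simp
  have Xv: "Xi v 0 = 0" using Xi_u[OF bv zI(1)] v0 by simp
  have wu: "wu 0 > 0" by (rule w_pos[OF bu zI(2)])
  have wv: "wv 0 > 0" by (rule w_pos[OF bv zI(2)])
  have eq: "wu 0 = wv 0"
  proof (rule ccontr)
    assume ne: "wu 0 \<noteq> wv 0"
    show False
    proof (cases "wu 0 < wv 0")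
      case True
      then have "wu 0 * wu 0 < wv 0 * wv 0" using wu by (intro mult_strict_mono) auto
      then have "Qf u wu 0 < Qf v wv 0" unfolding Qf_def[OF bu] Qf_def[OF bv] Xu Xv by simp
      then show False using compare[OF bv bu, of 0] Xu Xv m_pos by auto
    next
      case False
      then have "wv 0 < wu 0" using ne by simp
      then have "wv 0 * wv 0 < wu 0 * wu 0" using wv by (intro mult_strict_mono) auto
      then have "Qf v wv 0 < Qf u wu 0" unfolding Qf_def[OF bu] Qf_def[OF bv] Xu Xv by simp
      then show False using compare[OF bu bv, of 0] Xu Xv m_pos by auto
    qed
  qed
  have ou: "osol u wu" and ov: "osol v wv" using bu bv unfolding bsol_def by auto
  show ?thesis
  proof (cases "x \<in> {-L<..<L}")
    case True
    then show ?thesis using ivp_unique[OF ou ov zI(2) _ eq True] u0 v0 by simp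
  next
    case False
    then have "x = L \<or> x = -L" using x by auto
    then show ?thesis using bu bv unfolding bsol_def by auto
  qed
qed


definition cl :: "real \<Rightarrow> real" where "cl x = max (-L) (min L x)"

lemma cl_in: "cl x \<in> {-L..L}" unfolding cl_def using L_pos by auto
lemma cl_id: "x \<in> {-L..L} \<Longrightarrow> cl x = x" unfolding cl_def by auto
lemma cl_cont: "continuous_on S cl" unfolding cl_def by (intro continuous_intros)

lemma int_cont: fixes h :: "real \<Rightarrow> real" assumes "continuous_on {-L..L} h" shows "continuous_on {-L..L} (\<lambda>t. integral {-L..t} h)"
  by (rule indefinite_integral_continuous_1[OF integrable_continuous_interval[OF assms]])

lemma bc_int:
  fixes h :: "real \<Rightarrow> real"
  assumes h: "continuous_on {-L..L} h"
  shows "(\<lambda>x. exp (- K * cl x) * (c0 + integral {-L..cl x} h)) \<in> bcontfun"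
proof -
  define Gf where "Gf = (\<lambda>t. exp (- K * t) * (c0 + integral {-L..t} h))"
  have cG: "continuous_on {-L..L} Gf" unfolding Gf_def by (intro continuous_intros int_cont[OF h])
  have eq: "(\<lambda>x. exp (- K * cl x) * (c0 + integral {-L..cl x} h)) = (\<lambda>x. Gf (cl x))"
    unfolding Gf_def by simp
  have c: "continuous_on UNIV (\<lambda>x. Gf (cl x))"
    by (rule continuous_on_compose2[OF cG cl_cont]) (use cl_in in auto)
  have "bounded (Gf ` {-L..L})" by (rule compact_imp_bounded[OF compact_continuous_image[OF cG compact_Icc]])
  moreover have "range (\<lambda>x. Gf (cl x)) \<subseteq> Gf ` {-L..L}" using cl_in by auto
  ultimately have "bounded (range (\<lambda>x. Gf (cl x)))" by (rule bounded_subset)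
  then show ?thesis unfolding eq bcontfun_def using c by simp
qed

lemma int_exp_bound:
  fixes f :: "real \<Rightarrow> real"
  assumes K: "K > 0" and M: "M \<ge> 0" and t: "t \<in> {-L..L}" and f: "continuous_on {-L..L} f"
    and b: "\<And>y. y \<in> {-L..t} \<Longrightarrow> \<bar>f y\<bar> \<le> M * exp (K * y)"
  shows "\<bar>integral {-L..t} f\<bar> \<le> M * exp (K * t) / K"
proof -
  have sub: "{-L..t} \<subseteq> {-L..L}" using t by auto
  have fi: "f integrable_on {-L..t}"
    by (rule integrable_continuous_interval[OF continuous_on_subset[OF f sub]])
  have gi: "((\<lambda>y. M * exp (K * y)) has_integral (M * exp (K * t) / K - M * exp (K * (-L)) / K)) {-L..t}"
  proof (rule fundamental_theorem_of_calculus)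
    show "-L \<le> t" using t by simp
    fix y assume "y \<in> {-L..t}"
    have "((\<lambda>y. M * exp (K * y) / K) has_real_derivative M * (exp (K * y) * K) / K) (at y within {-L..t})"
      by (auto intro!: derivative_eq_intros)
    then show "((\<lambda>y. M * exp (K * y) / K) has_vector_derivative M * exp (K * y)) (at y within {-L..t})"
      using K by (simp add: has_real_derivative_iff_has_vector_derivative)
  qed
  have "\<bar>integral {-L..t} f\<bar> \<le> integral {-L..t} (\<lambda>y. M * exp (K * y))"
    using integral_norm_bound_integral[OF fi has_integral_integrable[OF gi]] b by simp
  also have "\<dots> = M * exp (K * t) / K - M * exp (K * (-L)) / K" by (rule integral_unique[OF gi])
  also have "\<dots> \<le> M * exp (K * t) / K" using M K by simp
  finally show ?thesis .
qed

lemma int_const_bound: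
  fixes f :: "real \<Rightarrow> real"
  assumes M: "M \<ge> 0" and t: "t \<in> {-L..L}" and f: "continuous_on {-L..L} f"
    and b: "\<And>y. y \<in> {-L..t} \<Longrightarrow> \<bar>f y\<bar> \<le> M"
  shows "\<bar>integral {-L..t} f\<bar> \<le> (t + L) * M"
proof -
  have sub: "{-L..t} \<subseteq> {-L..L}" using t by auto
  have fi: "f integrable_on {-L..t}"
    by (rule integrable_continuous_interval[OF continuous_on_subset[OF f sub]])
  have "\<bar>integral {-L..t} f\<bar> \<le> integral {-L..t} (\<lambda>y. M)"
    using integral_norm_bound_integral[OF fi integrable_const_ivl] b by simp
  also have "\<dots> = (t + L) * M" using t by (simp add: content_real)
  finally show ?thesis .
qed

end

type_synonym pr = "(real \<Rightarrow>\<^sub>C real) \<times> (real \<Rightarrow>\<^sub>C real)"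

locale ex_setting = setting +
  fixes amin amax bmax Kg K :: real
  assumes amin_pos: "amin > 0" and a_bd: "\<forall>x\<in>{-L..L}. amin \<le> a x \<and> a x \<le> amax"
    and b_bd: "\<forall>x\<in>{-L..L}. b x \<le> bmax" and Kg_nn: "Kg \<ge> 0" and Kg_lip: "Kg-lipschitz_on {-m..m} g"
    and K_big: "K \<ge> 4 * (1 / amin + bmax * Kg)" and K_pos: "K > 0"
begin

lemma bmax_pos: "bmax > 0" using b_bd b_pos L_pos by (metis atLeastAtMost_iff le_minus_iff less_eq_real_def order.strict_trans1 neg_le_0_iff_le)
lemma amax_pos: "amax > 0" using a_bd amin_pos L_pos by (metis atLeastAtMost_iff le_minus_iff less_eq_real_def order.strict_trans1 neg_le_0_iff_le)

definition kap :: "real \<Rightarrow> real" where "kap r = max (-m) (min m r)"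
definition gt :: "real \<Rightarrow> real" where "gt r = g (kap r)"

lemma kap_in: "kap r \<in> {-m..m}" unfolding kap_def using m_pos by auto
lemma kap_id: "r \<in> {-m..m} \<Longrightarrow> kap r = r" unfolding kap_def by auto
lemma kap_hi: "r \<ge> m \<Longrightarrow> kap r = m" unfolding kap_def using m_pos by auto
lemma kap_lo: "r \<le> -m \<Longrightarrow> kap r = -m" unfolding kap_def using m_pos by auto
lemma kap_lip: "\<bar>kap r1 - kap r2\<bar> \<le> \<bar>r1 - r2\<bar>" unfolding kap_def by (auto simp: max_def min_def)

lemma gt_lip: "\<bar>gt r1 - gt r2\<bar> \<le> Kg * \<bar>r1 - r2\<bar>"
proof -
  have "\<bar>gt r1 - gt r2\<bar> \<le> Kg * \<bar>kap r1 - kap r2\<bar>"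
    using lipschitz_onD[OF Kg_lip kap_in kap_in] unfolding gt_def dist_real_def .
  also have "\<dots> \<le> Kg * \<bar>r1 - r2\<bar>" using kap_lip Kg_nn by (intro mult_left_mono) auto
  finally show ?thesis .
qed

lemma gt_bound: "\<bar>gt r\<bar> \<le> Kg * m"
proof -
  have "\<bar>g (kap r) - g (kap 0)\<bar> \<le> Kg * \<bar>kap r - kap 0\<bar>"
    using lipschitz_onD[OF Kg_lip kap_in kap_in] unfolding dist_real_def .
  moreover have "kap 0 = 0" using kap_id m_pos by auto
  moreover have "\<bar>kap r\<bar> \<le> m" using kap_in[of r] by (simp add: abs_le_iff)
  ultimately show ?thesis unfolding gt_def using g0 Kg_nn by (smt (verit) mult_left_mono)
qed

lemma gt_cont: "continuous_on S gt"
proof -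
  have "Kg-lipschitz_on UNIV gt"
    using gt_lip Kg_nn by (intro lipschitz_onI) (auto simp: dist_real_def)
  then show ?thesis by (metis lipschitz_on_continuous_on continuous_on_subset subset_UNIV)
qed

lemma ac_cont: "continuous_on S (\<lambda>y. a (cl y))"
  by (rule continuous_on_compose2[OF a_cont cl_cont]) (use cl_in in auto)
lemma bc_cont: "continuous_on S (\<lambda>y. b (cl y))"
  by (rule continuous_on_compose2[OF b_cont cl_cont]) (use cl_in in auto)
lemma ac_pos: "a (cl y) > 0" using a_pos cl_in by auto

definition Uf :: "pr \<Rightarrow> real \<Rightarrow> real" where "Uf p x = exp (K * cl x) * apply_bcontfun (fst p) x"
definition Wf :: "pr \<Rightarrow> real \<Rightarrow> real" where "Wf p x = exp (K * cl x) * apply_bcontfun (snd p) x"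
definition h1 :: "pr \<Rightarrow> real \<Rightarrow> real" where "h1 p y = Wf p y / a (cl y)"
definition h2 :: "pr \<Rightarrow> real \<Rightarrow> real" where "h2 p y = b (cl y) * gt (Uf p y)"
definition F1 :: "pr \<Rightarrow> real \<Rightarrow> real" where
  "F1 p x = exp (- K * cl x) * (- m + integral {-L..cl x} (h1 p))"
definition F2 :: "real \<Rightarrow> pr \<Rightarrow> real \<Rightarrow> real" where
  "F2 s p x = exp (- K * cl x) * (s + integral {-L..cl x} (h2 p))"
definition Phi :: "real \<Rightarrow> pr \<Rightarrow> pr" where "Phi s p = (Bcontfun (F1 p), Bcontfun (F2 s p))"

lemma Uf_cont: "continuous_on S (Uf p)"
  unfolding Uf_def[abs_def] by (intro continuous_intros cl_cont continuous_on_apply_bcontfun)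
lemma Wf_cont: "continuous_on S (Wf p)"
  unfolding Wf_def[abs_def] by (intro continuous_intros cl_cont continuous_on_apply_bcontfun)
lemma h1_cont: "continuous_on S (h1 p)"
  unfolding h1_def[abs_def] using ac_pos by (intro continuous_intros Wf_cont ac_cont) (auto simp: less_imp_neq[symmetric])
lemma h2_cont: "continuous_on S (h2 p)"
  unfolding h2_def[abs_def]
  by (intro continuous_intros bc_cont continuous_on_compose2[OF gt_cont Uf_cont]) auto

lemma F1_bc: "F1 p \<in> bcontfun" unfolding F1_def[abs_def] by (rule bc_int[OF h1_cont])
lemma F2_bc: "F2 s p \<in> bcontfun" unfolding F2_def[abs_def] by (rule bc_int[OF h2_cont])

lemma Phi1: "apply_bcontfun (fst (Phi s p)) = F1 p" unfolding Phi_def using F1_bc by (simp add: Bcontfun_inverse)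
lemma Phi2: "apply_bcontfun (snd (Phi s p)) = F2 s p" unfolding Phi_def using F2_bc by (simp add: Bcontfun_inverse)


lemma dist_pair_le: "dist (p::pr) q \<le> dist (fst p) (fst q) + dist (snd p) (snd q)"
proof -
  obtain p1 p2 q1 q2 where "p = (p1, p2)" "q = (q1, q2)" by fastforce
  then show ?thesis by (simp add: dist_Pair_Pair sqrt_sum_squares_le_sum)
qed

lemma comp1_le: "\<bar>apply_bcontfun (fst p) y - apply_bcontfun (fst q) y\<bar> \<le> dist p q"
proof -
  have "dist (apply_bcontfun (fst p) y) (apply_bcontfun (fst q) y) \<le> dist (fst p) (fst q)" by (rule dist_bounded)
  also have "\<dots> \<le> dist p q" by (rule dist_fst_le)
  finally show ?thesis by (simp add: dist_real_def)
qed
lemma comp2_le: "\<bar>apply_bcontfun (snd p) y - apply_bcontfun (snd q) y\<bar> \<le> dist p q"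
proof -
  have "dist (apply_bcontfun (snd p) y) (apply_bcontfun (snd q) y) \<le> dist (snd p) (snd q)" by (rule dist_bounded)
  also have "\<dots> \<le> dist p q" by (rule dist_snd_le)
  finally show ?thesis by (simp add: dist_real_def)
qed

lemma F_diff_bound:
  fixes f1 f2 :: "real \<Rightarrow> real"
  assumes c1: "continuous_on {-L..L} f1" and c2: "continuous_on {-L..L} f2" and M: "M \<ge> 0"
    and b: "\<And>y. y \<in> {-L..L} \<Longrightarrow> \<bar>f1 y - f2 y\<bar> \<le> M * exp (K * y)"
  shows "\<bar>exp (- K * cl x) * (c1 + integral {-L..cl x} f1) - exp (- K * cl x) * (c1 + integral {-L..cl x} f2)\<bar> \<le> M / K"
proof -
  define t where "t = cl x"
  have t: "t \<in> {-L..L}" unfolding t_def by (rule cl_in)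
  have sub: "{-L..t} \<subseteq> {-L..L}" using t by auto
  have i1: "f1 integrable_on {-L..t}" by (rule integrable_continuous_interval[OF continuous_on_subset[OF c1 sub]])
  have i2: "f2 integrable_on {-L..t}" by (rule integrable_continuous_interval[OF continuous_on_subset[OF c2 sub]])
  have "\<bar>integral {-L..t} (\<lambda>y. f1 y - f2 y)\<bar> \<le> M * exp (K * t) / K"
    by (rule int_exp_bound[OF K_pos M t]) (use b sub in \<open>auto intro!: continuous_intros c1 c2\<close>)
  moreover have "integral {-L..t} (\<lambda>y. f1 y - f2 y) = integral {-L..t} f1 - integral {-L..t} f2"
    by (rule integral_diff[OF i1 i2])
  ultimately have "\<bar>integral {-L..t} f1 - integral {-L..t} f2\<bar> \<le> M * exp (K * t) / K" by simp
  then have "exp (- K * t) * \<bar>integral {-L..t} f1 - integral {-L..t} f2\<bar> \<le> exp (- K * t) * (M * exp (K * t) / K)"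
    by (rule mult_left_mono) simp
  also have "\<dots> = M / K" by (simp add: mult_exp_exp)
  finally show ?thesis unfolding t_def[symmetric]
    by (simp add: abs_mult right_diff_distrib[symmetric])
qed

lemma Phi_contr: "dist (Phi s p) (Phi s q) \<le> (1/2) * dist p q"
proof -
  define D where "D = dist p q"
  have D0: "D \<ge> 0" unfolding D_def by simp
  define C0 where "C0 = 1 / amin + bmax * Kg"
  have C0: "C0 \<ge> 1 / amin" "C0 \<ge> bmax * Kg" "bmax * Kg \<ge> 0" "1 / amin \<ge> 0"
    unfolding C0_def using amin_pos bmax_pos Kg_nn by auto
  have d1: "dist (fst (Phi s p)) (fst (Phi s q)) \<le> D / amin / K"
  proof (rule dist_bound)
    fix x
    show "dist (apply_bcontfun (fst (Phi s p)) x) (apply_bcontfun (fst (Phi s q)) x) \<le> D / amin / K"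
      unfolding Phi1 F1_def dist_real_def
    proof (rule F_diff_bound[OF h1_cont h1_cont])
      show "0 \<le> D / amin" using D0 amin_pos by simp
      fix y assume y: "y \<in> {-L..L}"
      have ay0: "a y \<ge> amin" using a_bd y by auto
      have ay: "a y \<ge> amin" "a y > 0" using ay0 amin_pos by linarith+
      have "\<bar>h1 p y - h1 q y\<bar> = exp (K * y) * \<bar>apply_bcontfun (snd p) y - apply_bcontfun (snd q) y\<bar> / a y"
        unfolding h1_def Wf_def cl_id[OF y] using ay
        by (simp add: abs_mult abs_divide diff_divide_distrib[symmetric] right_diff_distrib[symmetric])
      also have "\<dots> \<le> exp (K * y) * D / amin"
        using comp2_le[of p y q] ay amin_pos unfolding D_def
        by (intro frac_le mult_left_mono) auto
      finally show "\<bar>h1 p y - h1 q y\<bar> \<le> D / amin * exp (K * y)" by (simp add: mult.commute)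
    qed
  qed
  have d2: "dist (snd (Phi s p)) (snd (Phi s q)) \<le> bmax * Kg * D / K"
  proof (rule dist_bound)
    fix x
    show "dist (apply_bcontfun (snd (Phi s p)) x) (apply_bcontfun (snd (Phi s q)) x) \<le> bmax * Kg * D / K"
      unfolding Phi2 F2_def dist_real_def
    proof (rule F_diff_bound[OF h2_cont h2_cont])
      show "0 \<le> bmax * Kg * D" using D0 C0 by simp
      fix y assume y: "y \<in> {-L..L}"
      have byy: "b y > 0" "b y \<le> bmax" using b_bd b_pos y by auto
      have ue: "\<bar>Uf p y - Uf q y\<bar> = exp (K * y) * \<bar>apply_bcontfun (fst p) y - apply_bcontfun (fst q) y\<bar>"
        unfolding Uf_def cl_id[OF y] by (simp add: abs_mult right_diff_distrib[symmetric])
      have ub: "\<bar>Uf p y - Uf q y\<bar> \<le> exp (K * y) * D"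
        unfolding ue using comp1_le[of p y q] unfolding D_def by (intro mult_left_mono) auto
      have "\<bar>h2 p y - h2 q y\<bar> = b y * \<bar>gt (Uf p y) - gt (Uf q y)\<bar>"
        unfolding h2_def cl_id[OF y] using byy by (simp add: abs_mult right_diff_distrib[symmetric])
      also have "\<dots> \<le> bmax * (Kg * \<bar>Uf p y - Uf q y\<bar>)"
        using byy gt_lip Kg_nn by (intro mult_mono) auto
      also have "\<dots> \<le> bmax * (Kg * (exp (K * y) * D))"
        using ub bmax_pos Kg_nn by (intro mult_left_mono) auto
      finally show "\<bar>h2 p y - h2 q y\<bar> \<le> bmax * Kg * D * exp (K * y)" by (simp add: algebra_simps)
    qed
  qed
  have "dist (Phi s p) (Phi s q) \<le> D / amin / K + bmax * Kg * D / K"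
    using dist_pair_le[of "Phi s p" "Phi s q"] d1 d2 by linarith
  also have "\<dots> = C0 * D / K" unfolding C0_def using K_pos amin_pos by (simp add: field_simps)
  also have "\<dots> \<le> (1/2) * D"
  proof -
    have "C0 * D \<le> (K / 4) * D" using K_big D0 unfolding C0_def by (intro mult_right_mono) auto
    then have "C0 * D / K \<le> (K / 4) * D / K" using K_pos by (intro divide_right_mono) auto
    also have "\<dots> = D / 4" using K_pos by simp
    also have "\<dots> \<le> (1/2) * D" using D0 by simp
    finally show ?thesis .
  qed
  finally show ?thesis unfolding D_def .
qed

lemma Phi_shift: "dist (Phi s p) (Phi r p) \<le> exp (K * L) * \<bar>s - r\<bar>"
proof -
  have d1: "dist (fst (Phi s p)) (fst (Phi r p)) = 0" unfolding Phi_def by simp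
  have d2: "dist (snd (Phi s p)) (snd (Phi r p)) \<le> exp (K * L) * \<bar>s - r\<bar>"
  proof (rule dist_bound)
    fix x
    have "-L \<le> cl x" using cl_in by auto
    then have "K * (- cl x) \<le> K * L" using K_pos by (intro mult_left_mono) auto
    then have "- K * cl x \<le> K * L" by simp
    then have e: "exp (- K * cl x) \<le> exp (K * L)" by simp
    have "\<bar>F2 s p x - F2 r p x\<bar> = exp (- K * cl x) * \<bar>s - r\<bar>"
      unfolding F2_def by (simp add: abs_mult right_diff_distrib[symmetric])
    also have "\<dots> \<le> exp (K * L) * \<bar>s - r\<bar>" using e by (intro mult_right_mono) auto
    finally show "dist (apply_bcontfun (snd (Phi s p)) x) (apply_bcontfun (snd (Phi r p)) x) \<le> exp (K * L) * \<bar>s - r\<bar>"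
      unfolding Phi2 dist_real_def .
  qed
  show ?thesis using dist_pair_le[of "Phi s p" "Phi r p"] d1 d2 by linarith
qed

lemma Phi_fix_unique: "\<exists>!p. Phi s p = p"
  by (rule banach_fix_type[of "1/2"]) (use Phi_contr in auto)

definition Pf :: "real \<Rightarrow> pr" where "Pf s = (THE p. Phi s p = p)"

lemma Pf_fix: "Phi s (Pf s) = Pf s"
  unfolding Pf_def by (rule theI'[OF Phi_fix_unique])

lemma Pf_eq: "Phi s p = p \<Longrightarrow> Pf s = p"
  unfolding Pf_def by (rule the1_equality[OF Phi_fix_unique])

lemma Pf_lip: "dist (Pf s) (Pf r) \<le> 2 * exp (K * L) * \<bar>s - r\<bar>"
proof -
  have "dist (Pf s) (Pf r) = dist (Phi s (Pf s)) (Phi r (Pf r))" using Pf_fix by simp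
  also have "\<dots> \<le> dist (Phi s (Pf s)) (Phi r (Pf s)) + dist (Phi r (Pf s)) (Phi r (Pf r))"
    by (rule dist_triangle)
  also have "\<dots> \<le> exp (K * L) * \<bar>s - r\<bar> + (1/2) * dist (Pf s) (Pf r)"
    using Phi_shift Phi_contr by (intro add_mono) auto
  finally show ?thesis by simp
qed


lemma fix1: "Phi s p = p \<Longrightarrow> apply_bcontfun (fst p) = F1 p"
  using Phi1[of s p] by simp
lemma fix2: "Phi s p = p \<Longrightarrow> apply_bcontfun (snd p) = F2 s p"
  using Phi2[of s p] by simp

lemma fixU: assumes "Phi s p = p" "x \<in> {-L..L}" shows "Uf p x = -m + integral {-L..x} (h1 p)"
  unfolding Uf_def fix1[OF assms(1)] F1_def cl_id[OF assms(2)]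
  by (simp add: mult.assoc[symmetric] mult_exp_exp)
lemma fixW: assumes "Phi s p = p" "x \<in> {-L..L}" shows "Wf p x = s + integral {-L..x} (h2 p)"
  unfolding Wf_def fix2[OF assms(1)] F2_def cl_id[OF assms(2)]
  by (simp add: mult.assoc[symmetric] mult_exp_exp)

lemma int_deriv_at:
  fixes h :: "real \<Rightarrow> real"
  assumes "continuous_on {-L..L} h" "x \<in> {-L<..<L}"
  shows "((\<lambda>t. c1 + integral {-L..t} h) has_real_derivative h x) (at x)"
proof -
  have "((\<lambda>t. integral {-L..t} h) has_real_derivative h x) (at x within {-L..L})"
    by (rule integral_has_real_derivative[OF assms(1)]) (use assms(2) in auto)
  then have "((\<lambda>t. integral {-L..t} h) has_real_derivative h x) (at x)"
    using at_within_Icc_at[of "-L" x L] assms(2) by auto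
  then show ?thesis using DERIV_add[OF DERIV_const[of c1]] by fastforce
qed

lemma fix_Uderiv: assumes fp: "Phi s p = p" and x: "x \<in> {-L<..<L}"
  shows "(Uf p has_real_derivative Wf p x / a x) (at x)"
proof -
  have "((\<lambda>t. -m + integral {-L..t} (h1 p)) has_real_derivative h1 p x) (at x)"
    by (rule int_deriv_at[OF h1_cont x])
  then have "(Uf p has_real_derivative h1 p x) (at x)"
    by (rule has_field_derivative_transform_within_open[where S="{-L<..<L}"]) (use x fixU[OF fp] in auto)
  moreover have "h1 p x = Wf p x / a x" unfolding h1_def using cl_id x by auto
  ultimately show ?thesis by simp
qed

lemma fix_Wderiv: assumes fp: "Phi s p = p" and x: "x \<in> {-L<..<L}"
  shows "(Wf p has_real_derivative b x * gt (Uf p x)) (at x)"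
proof -
  have "((\<lambda>t. s + integral {-L..t} (h2 p)) has_real_derivative h2 p x) (at x)"
    by (rule int_deriv_at[OF h2_cont x])
  then have "(Wf p has_real_derivative h2 p x) (at x)"
    by (rule has_field_derivative_transform_within_open[where S="{-L<..<L}"]) (use x fixW[OF fp] in auto)
  moreover have "h2 p x = b x * gt (Uf p x)" unfolding h2_def using cl_id x by auto
  ultimately show ?thesis by simp
qed

definition sh :: "real \<Rightarrow> real" where "sh s = Uf (Pf s) L"

lemma sh_cont: "continuous_on UNIV sh"
proof -
  have LI: "L \<in> {-L..L}" using L_pos by simp
  have "(exp (K * L) * (2 * exp (K * L)))-lipschitz_on UNIV sh"
  proof (rule lipschitz_onI)
    fix s r :: real
    have "\<bar>sh s - sh r\<bar> = exp (K * L) * \<bar>apply_bcontfun (fst (Pf s)) L - apply_bcontfun (fst (Pf r)) L\<bar>"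
      unfolding sh_def Uf_def cl_id[OF LI] by (simp add: abs_mult right_diff_distrib[symmetric])
    also have "\<dots> \<le> exp (K * L) * dist (Pf s) (Pf r)" using comp1_le[of "Pf s" L "Pf r"] by (intro mult_left_mono) auto
    also have "\<dots> \<le> exp (K * L) * (2 * exp (K * L) * \<bar>s - r\<bar>)" using Pf_lip by (intro mult_left_mono) auto
    finally show "dist (sh s) (sh r) \<le> exp (K * L) * (2 * exp (K * L)) * dist s r"
      by (simp add: dist_real_def mult.assoc)
  qed simp
  then show ?thesis by (rule lipschitz_on_continuous_on)
qed

lemma sh0: "sh 0 = -m"
proof -
  define f0 where "f0 = (\<lambda>x. exp (- K * cl x) * (- m + integral {-L..cl x} (\<lambda>_. 0::real)))"
  have f0b: "f0 \<in> bcontfun" unfolding f0_def by (rule bc_int) (rule continuous_on_const)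
  have f0e: "f0 = (\<lambda>x. exp (- K * cl x) * (- m))" unfolding f0_def by simp
  define p0 :: pr where "p0 = (Bcontfun f0, Bcontfun (\<lambda>_. 0))"
  have a1: "apply_bcontfun (fst p0) = f0" unfolding p0_def using f0b by (simp add: Bcontfun_inverse)
  have a2: "apply_bcontfun (snd p0) = (\<lambda>_. 0)" unfolding p0_def using Bcontfun_inverse[OF const_bcontfun[of 0]] by simp
  have U0: "Uf p0 y = -m" for y unfolding Uf_def a1 f0e by (simp add: mult.assoc[symmetric] mult_exp_exp)
  have W0: "Wf p0 y = 0" for y unfolding Wf_def a2 by simp
  have h10: "h1 p0 = (\<lambda>_. 0)" unfolding h1_def[abs_def] W0 by simp
  have h20: "h2 p0 = (\<lambda>_. 0)" unfolding h2_def[abs_def] U0 gt_def using kap_lo[of "-m"] gmm by simp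
  have "F1 p0 = f0" unfolding F1_def[abs_def] h10 f0_def ..
  moreover have "F2 0 p0 = (\<lambda>_. 0)" unfolding F2_def[abs_def] h20 by simp
  ultimately have "Phi 0 p0 = p0" unfolding Phi_def p0_def by simp
  then have "Pf 0 = p0" by (rule Pf_eq)
  then show ?thesis unfolding sh_def using U0 by simp
qed

lemma shS: obtains S where "S \<ge> 0" "sh S \<ge> m"
proof -
  define N where "N = 2 * m * amax / L + 1"
  define S where "S = 2 * L * (bmax * (Kg * m)) + N"
  have "0 \<le> 2 * m * amax / L" using m_pos amax_pos L_pos by (intro divide_nonneg_pos mult_nonneg_nonneg) auto
  then have N: "N > 0" unfolding N_def by linarith
  have S0: "S \<ge> 0" unfolding S_def using N L_pos bmax_pos Kg_nn m_pos by simp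
  define p where "p = Pf S"
  have fp: "Phi S p = p" unfolding p_def by (rule Pf_fix)
  have h2b: "\<bar>h2 p z\<bar> \<le> bmax * (Kg * m)" if z: "z \<in> {-L..L}" for z
  proof -
    have bz: "b z > 0" using b_pos z by auto
    have "\<bar>h2 p z\<bar> = b z * \<bar>gt (Uf p z)\<bar>" unfolding h2_def cl_id[OF z] using bz by (simp add: abs_mult)
    also have "\<dots> \<le> bmax * (Kg * m)" using b_bd bz z gt_bound bmax_pos by (intro mult_mono) auto
    finally show ?thesis .
  qed
  have Wlow: "Wf p y \<ge> N" if y: "y \<in> {-L..L}" for y
  proof -
    have "\<bar>integral {-L..y} (h2 p)\<bar> \<le> (y + L) * (bmax * (Kg * m))"
      by (rule int_const_bound[OF _ y h2_cont]) (use h2b y bmax_pos Kg_nn m_pos in auto)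
    also have "\<dots> \<le> 2 * L * (bmax * (Kg * m))"
      using y bmax_pos Kg_nn m_pos by (intro mult_right_mono) auto
    finally have "integral {-L..y} (h2 p) \<ge> - (2 * L * (bmax * (Kg * m)))" by linarith
    then show ?thesis using fixW[OF fp y] unfolding S_def by linarith
  qed
  have h1low: "h1 p y \<ge> N / amax" if y: "y \<in> {-L..L}" for y
  proof -
    have ay: "0 < a y" "a y \<le> amax" using a_pos a_bd y by auto
    have "N / amax \<le> N / a y" using N ay by (intro divide_left_mono) auto
    also have "\<dots> \<le> Wf p y / a y" using Wlow[OF y] ay by (intro divide_right_mono) auto
    finally show ?thesis unfolding h1_def cl_id[OF y] .
  qed
  have LI: "L \<in> {-L..L}" using L_pos by simp
  have "integral {-L..L} (\<lambda>_. N / amax) \<le> integral {-L..L} (h1 p)"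
    by (rule integral_le[OF integrable_const_ivl integrable_continuous_interval[OF h1_cont]])
       (use h1low in auto)
  moreover have "integral {-L..L} (\<lambda>_. N / amax) = 2 * L * (N / amax)"
  proof -
    have "-L \<le> L" using L_pos by simp
    then show ?thesis by (simp add: content_real)
  qed
  ultimately have iL: "2 * L * (N / amax) \<le> integral {-L..L} (h1 p)" by linarith
  have "sh S = -m + integral {-L..L} (h1 p)" unfolding sh_def p_def[symmetric] using fixU[OF fp LI] by simp
  then have "sh S \<ge> -m + 2 * L * (N / amax)" using iL by linarith
  moreover have "2 * L * (N / amax) \<ge> 2 * m"
  proof -
    have "2 * L * (N / amax) = 4 * m + 2 * L / amax" unfolding N_def using L_pos amax_pos by (simp add: field_simps)
    then show ?thesis using m_pos L_pos amax_pos by simp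
  qed
  ultimately show ?thesis using that[OF S0] by simp
qed


lemma sol_bound_upper:
  assumes uc: "continuous_on UNIV u" and wc: "continuous_on UNIV w"
    and du: "\<And>x. x \<in> {-L<..<L} \<Longrightarrow> (u has_real_derivative w x / a x) (at x)"
    and dw: "\<And>x. x \<in> {-L<..<L} \<Longrightarrow> (w has_real_derivative b x * gt (u x)) (at x)"
    and uL: "u L = m" and umL: "u (-L) = -m"
    and x: "x \<in> {-L..L}"
  shows "u x \<le> m"
proof (rule ccontr)
  assume "\<not> u x \<le> m"
  then have ux: "u x > m" by simp
  have ucI: "continuous_on {-L..L} u" using uc by (rule continuous_on_subset) auto
  obtain x0 where x0: "x0 \<in> {-L..L}" "\<forall>y\<in>{-L..L}. u y \<le> u x0"
    using continuous_attains_sup[OF compact_Icc _ ucI] L_pos by auto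
  have ux0: "u x0 > m" using x0 x ux by force
  have "x0 \<noteq> L" using ux0 uL by auto
  moreover have "x0 \<noteq> -L" using ux0 umL m_pos by auto
  ultimately have x0I: "x0 \<in> {-L<..<L}" using x0(1) by auto
  have "w x0 / a x0 = 0"
  proof (rule DERIV_local_max[OF du[OF x0I]])
    show "0 < min (x0 + L) (L - x0)" using x0I by auto
    show "\<forall>y. \<bar>x0 - y\<bar> < min (x0 + L) (L - x0) \<longrightarrow> u y \<le> u x0"
      using x0(2) by (auto simp: abs_less_iff)
  qed
  moreover have "a x0 > 0" using a_pos x0 by auto
  ultimately have w0: "w x0 = 0" by simp
  define Z where "Z = {x0..L} \<inter> u -` {..m}"
  have cZ: "closed Z" unfolding Z_def
    by (rule continuous_closed_preimage[OF continuous_on_subset[OF uc]]) auto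
  have LZ: "L \<in> Z" unfolding Z_def using uL x0 by auto
  have bb: "bdd_below Z" unfolding Z_def by (rule bdd_belowI[of _ x0]) auto
  define x1 where "x1 = Inf Z"
  have x1Z: "x1 \<in> Z" unfolding x1_def using closed_contains_Inf[OF _ bb cZ] LZ by blast
  have x1r: "x0 \<le> x1" "x1 \<le> L" "u x1 \<le> m" using x1Z unfolding Z_def by auto
  have below: "\<And>y. x0 \<le> y \<Longrightarrow> y < x1 \<Longrightarrow> u y > m"
  proof (rule ccontr)
    fix y assume y: "x0 \<le> y" "y < x1" "\<not> u y > m"
    then have "y \<in> Z" unfolding Z_def using x1r by auto
    then have "x1 \<le> y" unfolding x1_def by (rule cInf_lower[OF _ bb])
    then show False using y by simp
  qed
  have x01: "x0 < x1" using x1r ux0 by (cases "x0 = x1") auto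
  have wz: "\<And>t. x0 \<le> t \<Longrightarrow> t < x1 \<Longrightarrow> w t = 0"
  proof -
    fix t assume t: "x0 \<le> t" "t < x1"
    show "w t = 0"
    proof (cases "x0 = t")
      case True then show ?thesis using w0 by simp
    next
      case False
      then have xt: "x0 < t" using t by simp
      have "w t = w x0"
      proof (rule DERIV_isconst2[OF xt continuous_on_subset[OF wc]])
        fix y assume y: "x0 < y" "y < t"
        then have yI: "y \<in> {-L<..<L}" using x0I t x1r by auto
        have "u y > m" using below y t by auto
        then have "gt (u y) = 0" unfolding gt_def using kap_hi gm by simp
        then show "(w has_real_derivative 0) (at y)" using dw[OF yI] by simp
      qed (use xt in auto)
      then show ?thesis using w0 by simp
    qed
  qed
  have "u x1 = u x0"
  proof (rule DERIV_isconst2[OF x01 continuous_on_subset[OF uc]])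
    fix y assume y: "x0 < y" "y < x1"
    then have yI: "y \<in> {-L<..<L}" using x0I x1r by auto
    then show "(u has_real_derivative 0) (at y)" using du[OF yI] wz y by simp
  qed (use x01 in auto)
  then show False using x1r ux0 by simp
qed

lemma sol_bound_lower:
  assumes uc: "continuous_on UNIV u" and wc: "continuous_on UNIV w"
    and du: "\<And>x. x \<in> {-L<..<L} \<Longrightarrow> (u has_real_derivative w x / a x) (at x)"
    and dw: "\<And>x. x \<in> {-L<..<L} \<Longrightarrow> (w has_real_derivative b x * gt (u x)) (at x)"
    and uL: "u L = m" and umL: "u (-L) = -m"
    and x: "x \<in> {-L..L}"
  shows "u x \<ge> -m"
proof (rule ccontr)
  assume "\<not> u x \<ge> -m"
  then have ux: "u x < -m" by simp
  have ucI: "continuous_on {-L..L} u" using uc by (rule continuous_on_subset) auto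
  obtain x0 where x0: "x0 \<in> {-L..L}" "\<forall>y\<in>{-L..L}. u x0 \<le> u y"
    using continuous_attains_inf[OF compact_Icc _ ucI] L_pos by auto
  have ux0: "u x0 < -m" using x0 x ux by force
  have "x0 \<noteq> L" using ux0 uL m_pos by auto
  moreover have "x0 \<noteq> -L" using ux0 umL by auto
  ultimately have x0I: "x0 \<in> {-L<..<L}" using x0(1) by auto
  have "w x0 / a x0 = 0"
  proof (rule DERIV_local_min[OF du[OF x0I]])
    show "0 < min (x0 + L) (L - x0)" using x0I by auto
    show "\<forall>y. \<bar>x0 - y\<bar> < min (x0 + L) (L - x0) \<longrightarrow> u x0 \<le> u y"
      using x0(2) by (auto simp: abs_less_iff)
  qed
  moreover have "a x0 > 0" using a_pos x0 by auto
  ultimately have w0: "w x0 = 0" by simp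
  define Z where "Z = {x0..L} \<inter> u -` {-m..}"
  have cZ: "closed Z" unfolding Z_def
    by (rule continuous_closed_preimage[OF continuous_on_subset[OF uc]]) auto
  have LZ: "L \<in> Z" unfolding Z_def using uL x0 m_pos by auto
  have bb: "bdd_below Z" unfolding Z_def by (rule bdd_belowI[of _ x0]) auto
  define x1 where "x1 = Inf Z"
  have x1Z: "x1 \<in> Z" unfolding x1_def using closed_contains_Inf[OF _ bb cZ] LZ by blast
  have x1r: "x0 \<le> x1" "x1 \<le> L" "u x1 \<ge> -m" using x1Z unfolding Z_def by auto
  have below: "\<And>y. x0 \<le> y \<Longrightarrow> y < x1 \<Longrightarrow> u y < -m"
  proof (rule ccontr)
    fix y assume y: "x0 \<le> y" "y < x1" "\<not> u y < -m"
    then have "y \<in> Z" unfolding Z_def using x1r by auto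
    then have "x1 \<le> y" unfolding x1_def by (rule cInf_lower[OF _ bb])
    then show False using y by simp
  qed
  have x01: "x0 < x1" using x1r ux0 by (cases "x0 = x1") auto
  have wz: "\<And>t. x0 \<le> t \<Longrightarrow> t < x1 \<Longrightarrow> w t = 0"
  proof -
    fix t assume t: "x0 \<le> t" "t < x1"
    show "w t = 0"
    proof (cases "x0 = t")
      case True then show ?thesis using w0 by simp
    next
      case False
      then have xt: "x0 < t" using t by simp
      have "w t = w x0"
      proof (rule DERIV_isconst2[OF xt continuous_on_subset[OF wc]])
        fix y assume y: "x0 < y" "y < t"
        then have yI: "y \<in> {-L<..<L}" using x0I t x1r by auto
        have "u y < -m" using below y t by auto
        then have "gt (u y) = 0" unfolding gt_def using kap_lo gmm by simp
        then show "(w has_real_derivative 0) (at y)" using dw[OF yI] by simp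
      qed (use xt in auto)
      then show ?thesis using w0 by simp
    qed
  qed
  have "u x1 = u x0"
  proof (rule DERIV_isconst2[OF x01 continuous_on_subset[OF uc]])
    fix y assume y: "x0 < y" "y < x1"
    then have yI: "y \<in> {-L<..<L}" using x0I x1r by auto
    then show "(u has_real_derivative 0) (at y)" using du[OF yI] wz y by simp
  qed (use x01 in auto)
  then show False using x1r ux0 by simp
qed

lemma exists_bsol: "\<exists>u w. bsol u w"
proof -
  obtain S where S: "S \<ge> 0" "sh S \<ge> m" using shS by blast
  obtain s where s: "sh s = m"
    using IVT'[of sh 0 m S] S sh0 m_pos continuous_on_subset[OF sh_cont] by force
  define p where "p = Pf s"
  have fp: "Phi s p = p" unfolding p_def by (rule Pf_fix)
  define u where "u = Uf p"
  define w where "w = Wf p"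
  have LI: "L \<in> {-L..L}" "-L \<in> {-L..L}" using L_pos by auto
  have uL: "u L = m" using s unfolding u_def p_def sh_def by simp
  have umL: "u (-L) = -m" unfolding u_def using fixU[OF fp LI(2)] by simp
  have uc: "continuous_on UNIV u" unfolding u_def by (rule Uf_cont)
  have wc: "continuous_on UNIV w" unfolding w_def by (rule Wf_cont)
  have du: "\<And>x. x \<in> {-L<..<L} \<Longrightarrow> (u has_real_derivative w x / a x) (at x)"
    unfolding u_def w_def by (rule fix_Uderiv[OF fp])
  have dw: "\<And>x. x \<in> {-L<..<L} \<Longrightarrow> (w has_real_derivative b x * gt (u x)) (at x)"
    unfolding u_def w_def by (rule fix_Wderiv[OF fp])
  have bd: "\<And>x. x \<in> {-L..L} \<Longrightarrow> u x \<in> {-m..m}"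
    using sol_bound_upper[OF uc wc du dw uL umL] sol_bound_lower[OF uc wc du dw uL umL] by auto
  have "osol u w"
    unfolding osol_def
  proof (intro conjI ballI)
    show "continuous_on {-L..L} u" using uc by (rule continuous_on_subset) auto
    fix x assume x: "x \<in> {-L<..<L}"
    show "(u has_real_derivative w x / a x) (at x)" by (rule du[OF x])
    have "gt (u x) = g (u x)" unfolding gt_def using kap_id bd x by auto
    then show "(w has_real_derivative b x * g (u x)) (at x)" using dw[OF x] by simp
  qed
  then have "bsol u w" unfolding bsol_def using uL umL by simp
  then show ?thesis by blast
qed

end


context setting
begin

lemma existence: "\<exists>u. is_solution L a b (\<lambda>s. - g s) m u"
proof -
  obtain amin amax where am: "amin > 0" "\<forall>x\<in>{-L..L}. amin \<le> a x \<and> a x \<le> amax"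
    using a_bounds by blast
  obtain bmax where bm: "\<forall>x\<in>{-L..L}. 0 < b x \<and> b x \<le> bmax" using b_bounds by blast
  obtain Kg where Kg: "Kg \<ge> 0" "Kg-lipschitz_on {-m..m} g" using g_lip by blast
  have "0 \<in> {-L..L}" using L_pos by simp
  then have bmp: "bmax > 0" using bm by force
  define K where "K = 4 * (1 / amin + bmax * Kg) + 1"
  have "1 / amin + bmax * Kg \<ge> 0" using am(1) bmp Kg(1) by simp
  then have Kp: "K > 0" "K \<ge> 4 * (1 / amin + bmax * Kg)" unfolding K_def by auto
  have "ex_setting L m a b da db G g amin amax bmax Kg K"
    unfolding ex_setting_def ex_setting_axioms_def using setting_axioms am bm Kg Kp by auto
  then interpret E: ex_setting L m a b da db G g amin amax bmax Kg K .
  obtain u w where "bsol u w" using E.exists_bsol by blast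
  then show ?thesis using bsol_is_solution by blast
qed

lemma odd_sol: assumes bs: "bsol u w" and x: "x \<in> {-L..L}" shows "u (-x) = - u x"
proof -
  have mx: "-x \<in> {-L..L}" using x by auto
  have "u (-x) = (\<lambda>x. - u (-x)) (-x)" by (rule bsol_unique[OF bs bsol_reflect[OF bs] mx])
  then show ?thesis by simp
qed

end

theorem proposition4p1:
  fixes L m :: real and a b da db G g :: "real \<Rightarrow> real"
  assumes L_pos: "L > 0" and m_pos: "m > 0"
    and a_C1: "C1_on_with_deriv {-L..L} a da"
    and b_C1: "C1_on_with_deriv {-L..L} b db"
    and a_pos: "\<forall>x\<in>{-L..L}. a x > 0"
    and b_pos: "\<forall>x\<in>{-L..L}. b x > 0"
    and a_even: "\<forall>x\<in>{-L..L}. a (-x) = a x"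
    and b_even: "\<forall>x\<in>{-L..L}. b (-x) = b x"
    and G_deriv: "\<forall>x. (G has_real_derivative g x) (at x)"
    and g_loc_lip: "\<forall>x. \<exists>e>0. \<exists>C. C-lipschitz_on (ball x e) g"
    and G_nonneg: "\<forall>x. G x \<ge> 0"
    and G_even: "\<forall>x. G (-x) = G x"
    and ab_mono: "\<forall>x\<in>{0<..<L}. da x * b x + a x * db x \<ge> 0"
    and G_ge: "\<forall>x>0. G x \<ge> G m"
    and g_nonpos: "\<forall>x\<in>{0<..<m}. g x \<le> 0"
  shows "(\<exists>u. is_solution L a b (\<lambda>s. - g s) m u) \<and>
         (\<forall>u v. is_solution L a b (\<lambda>s. - g s) m u \<and> is_solution L a b (\<lambda>s. - g s) m v
                 \<longrightarrow> (\<forall>x\<in>{-L..L}. u x = v x)) \<and>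
         (\<forall>u. is_solution L a b (\<lambda>s. - g s) m u \<longrightarrow>
                (\<forall>x\<in>{-L..L}. u (-x) = - u x) \<and> strict_mono_on {-L..L} u)"
proof -
  have "setting L m a b da db G g" unfolding setting_def using assms by blast
  then interpret S: setting L m a b da db G g .
  show ?thesis
  proof (intro conjI allI impI)
    show "\<exists>u. is_solution L a b (\<lambda>s. - g s) m u" by (rule S.existence)
  next
    fix u v assume h: "is_solution L a b (\<lambda>s. - g s) m u \<and> is_solution L a b (\<lambda>s. - g s) m v"
    obtain wu where wu: "S.bsol u wu" using S.is_solution_bsol h by blast
    obtain wv where wv: "S.bsol v wv" using S.is_solution_bsol h by blast
    show "\<forall>x\<in>{-L..L}. u x = v x" using S.bsol_unique[OF wu wv] by blast
  next
    fix u assume h: "is_solution L a b (\<lambda>s. - g s) m u"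
    obtain w where w: "S.bsol u w" using S.is_solution_bsol h by blast
    show "\<forall>x\<in>{-L..L}. u (-x) = - u x" using S.odd_sol[OF w] by blast
    show "strict_mono_on {-L..L} u" by (rule S.bsol_strict_mono[OF w])
  qed
qed

end
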